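(* Let $X$ be a finite set and $\mathcal{P}^1,\dots,\mathcal{P}^M$ partitions of $X$, with Multiscale Clustering Filtration $(K^m)_{m\le M}$ and Multiscale Clustering Nerve Filtration $(N^m)_{m\le M}$. Then for all integers $k\ge0$, $1\le m\le M$ and $p\ge0$ with $m+p\le M$, $H_k^p(N^m)\cong H_k^p(K^m)$.
   Context: A partition of $X$ is a collection of non-empty pairwise disjoint subsets (clusters) whose union is $X$; $\#\mathcal{P}$ is its number of clusters. For a finite non-empty set $C$, $\Delta C$ is the set of all non-empty subsets of $C$. The MCF is $K^m:=\bigcup_{l\le m}\bigcup_{C\in\mathcal{P}^l}\Delta C$. For $m\le M$ let $A(m)=\{(m',i): m'\le m,\ 1\le i\le\#\mathcal{P}^{m'}\}$ and let $C_{(m',i)}$ be the $i$-th cluster of $\mathcal{P}^{m'}$ (for a fixed enumeration of the clusters of each partition). The Multiscale Clustering Nerve $N^m$ is the nerve of the family $(C_\alpha)_{\alpha\in A(m)}$: the abstract simplicial complex on vertex set $A(m)$ whose simplices are the non-empty $S\subseteq A(m)$ with $\bigcap_{\alpha\in S}C_\alpha\neq\emptyset$; thus $N^m\subseteq N^{m+p}$. Homology is simplicial homology over a field, and $H_k^p(F^m)$ denotes the image of the map $H_k(F^m)\to H_k(F^{m+p})$ induced by inclusion, for $F=K$ or $F=N$. *)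

theory Defs
  imports Main "HOL-Library.Product_Lexorder"
begin

text \<open>An abstract simplicial complex is a set of non-empty finite vertex sets.
  The k-simplices are those with k+1 vertices.  Orientation of simplices is
  induced by the linear order on the vertex type.\<close>

definition simplices :: "'v set set \<Rightarrow> nat \<Rightarrow> 'v set set" where
  "simplices K k = {\<sigma> \<in> K. card \<sigma> = Suc k}"

definition chains :: "'v set set \<Rightarrow> nat \<Rightarrow> ('v set \<Rightarrow> 'f::field) set" where
  "chains K k = {c. \<forall>\<sigma>. c \<sigma> \<noteq> 0 \<longrightarrow> \<sigma> \<in> simplices K k}"

text \<open>Boundary map from k-chains to (k-1)-chains; the boundary of 0-chains is 0
  (unreduced homology).  The face of \<sigma> obtained by deleting the vertex v
  carries the sign (-1)^(number of vertices of \<sigma> below v).\<close>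
definition boundary :: "'v::linorder set set \<Rightarrow> nat \<Rightarrow> ('v set \<Rightarrow> 'f::field) \<Rightarrow> ('v set \<Rightarrow> 'f)" where
  "boundary K k c = (\<lambda>\<tau>. if \<tau> \<in> K \<and> card \<tau> = k then
      (\<Sum>\<sigma> \<in> {\<sigma> \<in> simplices K k. \<tau> \<subseteq> \<sigma>}.
          (- 1) ^ card {u \<in> \<sigma>. u < the_elem (\<sigma> - \<tau>)} * c \<sigma>)
    else 0)"

definition cycles :: "'v::linorder set set \<Rightarrow> nat \<Rightarrow> ('v set \<Rightarrow> 'f::field) set" where
  "cycles K k = {c \<in> chains K k. boundary K k c = (\<lambda>_. 0)}"

definition boundaries :: "'v::linorder set set \<Rightarrow> nat \<Rightarrow> ('v set \<Rightarrow> 'f::field) set" where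
  "boundaries K k = boundary K (Suc k) ` chains K (Suc k)"

definition coset :: "('v set \<Rightarrow> 'f::field) set \<Rightarrow> ('v set \<Rightarrow> 'f) \<Rightarrow> ('v set \<Rightarrow> 'f) set" where
  "coset B z = (\<lambda>b. (\<lambda>x. z x + b x)) ` B"

text \<open>Persistent homology H_k^p for K \<subseteq> L: the image of H_k(K) \<rightarrow> H_k(L), i.e. the
  set of classes [z] \<in> H_k(L) = Z_k(L)/B_k(L) of cycles z of K.  Its vector space
  structure is the one inherited from H_k(L) (coset arithmetic).\<close>
definition pers_homology :: "'v::linorder set set \<Rightarrow> 'v set set \<Rightarrow> nat \<Rightarrow> ('v set \<Rightarrow> 'f::field) set set" where
  "pers_homology K L k = coset (boundaries L k) ` cycles K k"

definition coset_lincomb :: "'f::field \<Rightarrow> ('w \<Rightarrow> 'f) set \<Rightarrow> ('w \<Rightarrow> 'f) set \<Rightarrow> ('w \<Rightarrow> 'f) set" where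
  "coset_lincomb a U V = {(\<lambda>x. a * u x + v x) | u v. u \<in> U \<and> v \<in> V}"

definition quot_iso ::
  "('v set \<Rightarrow> 'f::field) set set \<Rightarrow> ('w set \<Rightarrow> 'f) set set \<Rightarrow> bool" (infix "\<cong>\<^sub>Q" 50) where
  "Q1 \<cong>\<^sub>Q Q2 \<longleftrightarrow> (\<exists>\<phi>. bij_betw \<phi> Q1 Q2 \<and>
      (\<forall>a U V. U \<in> Q1 \<longrightarrow> V \<in> Q1 \<longrightarrow>
          \<phi> (coset_lincomb a U V) = coset_lincomb a (\<phi> U) (\<phi> V)))"

text \<open>Partitions P^1..P^M are given by enumerations: C m i is the i-th cluster
  of P^m, 1 \<le> i \<le> n m, where n m = #P^m.\<close>
definition enum_partition :: "'a set \<Rightarrow> nat \<Rightarrow> (nat \<Rightarrow> 'a set) \<Rightarrow> bool" where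
  "enum_partition X N C \<longleftrightarrow>
     (\<forall>i \<in> {1..N}. C i \<noteq> {}) \<and>
     (\<forall>i \<in> {1..N}. \<forall>j \<in> {1..N}. i \<noteq> j \<longrightarrow> C i \<inter> C j = {}) \<and>
     (\<Union>i \<in> {1..N}. C i) = X"

definition MCF :: "(nat \<Rightarrow> nat) \<Rightarrow> (nat \<Rightarrow> nat \<Rightarrow> 'a set) \<Rightarrow> nat \<Rightarrow> 'a set set" where
  "MCF n C m = (\<Union>l \<in> {1..m}. \<Union>i \<in> {1..n l}. {S. S \<noteq> {} \<and> S \<subseteq> C l i})"

definition index_set :: "(nat \<Rightarrow> nat) \<Rightarrow> nat \<Rightarrow> (nat \<times> nat) set" where
  "index_set n m = {(m', i). 1 \<le> m' \<and> m' \<le> m \<and> 1 \<le> i \<and> i \<le> n m'}"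

definition MCN :: "(nat \<Rightarrow> nat) \<Rightarrow> (nat \<Rightarrow> nat \<Rightarrow> 'a set) \<Rightarrow> nat \<Rightarrow> (nat \<times> nat) set set" where
  "MCN n C m = {S. S \<noteq> {} \<and> S \<subseteq> index_set n m \<and>
                   (\<Inter>\<alpha> \<in> S. C (fst \<alpha>) (snd \<alpha>)) \<noteq> {}}"

end

theory Submission
  imports Defs "HOL-Library.Option_ord"
begin

definition cplx :: "'v set set \<Rightarrow> bool" where
  "cplx K \<longleftrightarrow> finite K \<and> (\<forall>\<sigma>\<in>K. finite \<sigma> \<and> \<sigma> \<noteq> {}) \<and>
     (\<forall>\<sigma>\<in>K. \<forall>\<tau>. \<tau> \<subseteq> \<sigma> \<longrightarrow> \<tau> \<noteq> {} \<longrightarrow> \<tau> \<in> K)"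

lemma cplxD:
  assumes "cplx K"
  shows "finite K" "\<sigma> \<in> K \<Longrightarrow> finite \<sigma>" "\<sigma> \<in> K \<Longrightarrow> \<sigma> \<noteq> {}"
    "\<sigma> \<in> K \<Longrightarrow> \<tau> \<subseteq> \<sigma> \<Longrightarrow> \<tau> \<noteq> {} \<Longrightarrow> \<tau> \<in> K"
  using assms unfolding cplx_def by blast+

lemma chains_lc:
  assumes "c \<in> chains K k" "d \<in> chains K k"
  shows "(\<lambda>x. a * c x + d x) \<in> chains K k"
proof -
  have "\<And>\<sigma>. a * c \<sigma> + d \<sigma> \<noteq> 0 \<Longrightarrow> c \<sigma> \<noteq> 0 \<or> d \<sigma> \<noteq> 0" by auto
  then show ?thesis using assms unfolding chains_def by blast
qed

lemma chains_zero[simp]: "(\<lambda>_. 0) \<in> chains K k"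
  unfolding chains_def by auto

lemma chains_uminus: "c \<in> chains K k \<Longrightarrow> (\<lambda>x. - c x) \<in> chains K k"
  unfolding chains_def by auto

lemma chains_diff: "c \<in> chains K k \<Longrightarrow> d \<in> chains K k \<Longrightarrow> (\<lambda>x. c x - d x) \<in> chains K k"
  using chains_lc[of d K k c "-1"] by simp

lemma chains_add: "c \<in> chains K k \<Longrightarrow> d \<in> chains K k \<Longrightarrow> (\<lambda>x. c x + d x) \<in> chains K k"
  using chains_lc[of c K k d 1] by simp

lemma chains_mono: "K \<subseteq> L \<Longrightarrow> c \<in> chains K k \<Longrightarrow> c \<in> chains L k"
  unfolding chains_def simplices_def by auto

lemma boundary_lc:
  "boundary K k (\<lambda>x. a * c x + d x) = (\<lambda>x. a * boundary K k c x + boundary K k d x)"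
  unfolding boundary_def
  by (auto simp: fun_eq_iff sum_distrib_left sum.distrib algebra_simps)

lemma boundary_zero[simp]: "boundary K k (\<lambda>_. 0) = (\<lambda>_. 0)"
  unfolding boundary_def by auto

lemma boundary_scale: "boundary K k (\<lambda>x. a * c x) = (\<lambda>x. a * boundary K k c x)"
  using boundary_lc[of K k a c "\<lambda>_. 0"] by simp

lemma boundary_add: "boundary K k (\<lambda>x. c x + d x) = (\<lambda>x. boundary K k c x + boundary K k d x)"
  using boundary_lc[of K k 1 c d] by simp

lemma boundary_uminus: "boundary K k (\<lambda>x. - c x) = (\<lambda>x. - boundary K k c x)"
  using boundary_scale[of K k "-1" c] by simp

lemma boundary_diff: "boundary K k (\<lambda>x. c x - d x) = (\<lambda>x. boundary K k c x - boundary K k d x)"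
  using boundary_lc[of K k "-1" d c] by (simp add: algebra_simps)

lemma boundary_chain:
  assumes "cplx K"
  shows "boundary K (Suc k) c \<in> chains K k"
  unfolding chains_def simplices_def boundary_def by auto

lemma boundary_0:
  assumes "cplx K"
  shows "boundary K 0 c = (\<lambda>_. 0)"
  using cplxD[OF assms] unfolding boundary_def by (auto simp: fun_eq_iff)

lemma boundary_mono:
  assumes "cplx K" "cplx L" "K \<subseteq> L" "c \<in> chains K k"
  shows "boundary L k c = boundary K k c"
proof
  fix \<tau>
  show "boundary L k c \<tau> = boundary K k c \<tau>"
  proof (cases "\<tau> \<in> K \<and> card \<tau> = k")
    case True
    have "(\<Sum>\<sigma> \<in> {\<sigma> \<in> simplices L k. \<tau> \<subseteq> \<sigma>}. (- 1) ^ card {u \<in> \<sigma>. u < the_elem (\<sigma> - \<tau>)} * c \<sigma>)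
        = (\<Sum>\<sigma> \<in> {\<sigma> \<in> simplices K k. \<tau> \<subseteq> \<sigma>}. (- 1) ^ card {u \<in> \<sigma>. u < the_elem (\<sigma> - \<tau>)} * c \<sigma>)"
      apply (rule sum.mono_neutral_right)
      using assms cplxD[OF assms(2)] unfolding simplices_def chains_def by auto
    then show ?thesis using True assms(3) unfolding boundary_def by auto
  next
    case False
    have "boundary L k c \<tau> = 0"
    proof (cases "\<tau> \<in> L \<and> card \<tau> = k")
      case True
      then have "\<tau> \<noteq> {}" using cplxD(3)[OF assms(2)] by auto
      have "(\<Sum>\<sigma> \<in> {\<sigma> \<in> simplices L k. \<tau> \<subseteq> \<sigma>}. (- 1) ^ card {u \<in> \<sigma>. u < the_elem (\<sigma> - \<tau>)} * c \<sigma>) = 0"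
      proof (rule sum.neutral, rule ballI)
        fix \<sigma> assume s: "\<sigma> \<in> {\<sigma> \<in> simplices L k. \<tau> \<subseteq> \<sigma>}"
        have "c \<sigma> = 0"
        proof (rule ccontr)
          assume "c \<sigma> \<noteq> 0"
          then have "\<sigma> \<in> K" using assms(4) unfolding chains_def simplices_def by auto
          then have "\<tau> \<in> K" using cplxD(4)[OF assms(1)] s \<open>\<tau> \<noteq> {}\<close> by auto
          then show False using False True by auto
        qed
        then show "(- 1) ^ card {u \<in> \<sigma>. u < the_elem (\<sigma> - \<tau>)} * c \<sigma> = 0" by simp
      qed
      then show ?thesis unfolding boundary_def by auto
    qed (auto simp: boundary_def)
    then show ?thesis using False unfolding boundary_def by auto
  qed
qed

lemma cycles_mono:
  assumes "cplx K" "cplx L" "K \<subseteq> L"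
  shows "cycles K k \<subseteq> cycles L k"
proof
  fix z assume "z \<in> cycles K k"
  then show "z \<in> cycles L k"
    using boundary_mono[OF assms, of z] chains_mono[OF assms(3), of z] unfolding cycles_def by simp
qed

lemma boundaries_mono:
  assumes "cplx K" "cplx L" "K \<subseteq> L"
  shows "boundaries K k \<subseteq> boundaries L k"
proof
  fix b assume "b \<in> boundaries K k"
  then obtain c where c: "c \<in> chains K (Suc k)" "b = boundary K (Suc k) c" unfolding boundaries_def by auto
  then show "b \<in> boundaries L k"
    using boundary_mono[OF assms c(1)] chains_mono[OF assms(3) c(1)] unfolding boundaries_def
    by (intro image_eqI[where x=c]) auto
qed

lemma boundaries_lc:
  assumes "b \<in> boundaries K k" "b' \<in> boundaries K k"
  shows "(\<lambda>x. a * b x + b' x) \<in> boundaries K k"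
proof -
  obtain c c' where "c \<in> chains K (Suc k)" "c' \<in> chains K (Suc k)"
    "b = boundary K (Suc k) c" "b' = boundary K (Suc k) c'"
    using assms unfolding boundaries_def by auto
  then show ?thesis unfolding boundaries_def
    by (intro image_eqI[where x="\<lambda>x. a * c x + c' x"]) (simp_all add: boundary_lc chains_lc)
qed

lemma boundaries_zero[simp]: "(\<lambda>_. 0) \<in> boundaries K k"
  unfolding boundaries_def by (rule image_eqI[where x="\<lambda>_. 0"]) simp_all

lemma boundaries_add: "b \<in> boundaries K k \<Longrightarrow> b' \<in> boundaries K k \<Longrightarrow> (\<lambda>x. b x + b' x) \<in> boundaries K k"
  using boundaries_lc[of b K k b' 1] by simp
lemma boundaries_scale: "b \<in> boundaries K k \<Longrightarrow> (\<lambda>x. a * b x) \<in> boundaries K k"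
  using boundaries_lc[of b K k "\<lambda>_. 0" a] by simp
lemma boundaries_uminus: "b \<in> boundaries K k \<Longrightarrow> (\<lambda>x. - b x) \<in> boundaries K k"
  using boundaries_scale[of b K k "-1"] by simp
lemma boundaries_diff: "b \<in> boundaries K k \<Longrightarrow> b' \<in> boundaries K k \<Longrightarrow> (\<lambda>x. b x - b' x) \<in> boundaries K k"
  using boundaries_lc[of b' K k b "-1"] by simp

lemma cycles_lc:
  assumes "c \<in> cycles K k" "d \<in> cycles K k"
  shows "(\<lambda>x. a * c x + d x) \<in> cycles K k"
  using assms unfolding cycles_def by (simp add: chains_lc boundary_lc)

lemma cycles_zero[simp]: "(\<lambda>_. 0) \<in> cycles K k"
  unfolding cycles_def by auto

lemma cycles_diff: "c \<in> cycles K k \<Longrightarrow> d \<in> cycles K k \<Longrightarrow> (\<lambda>x. c x - d x) \<in> cycles K k"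
  using cycles_lc[of d K k c "-1"] by simp

lemma coset_eq_iff:
  assumes "\<And>b b'. b \<in> B \<Longrightarrow> b' \<in> B \<Longrightarrow> (\<lambda>x. b x - b' x) \<in> B"
    and "\<And>b b'. b \<in> B \<Longrightarrow> b' \<in> B \<Longrightarrow> (\<lambda>x. b x + b' x) \<in> B"
    and "(\<lambda>_. 0) \<in> B"
  shows "coset B z1 = coset B z2 \<longleftrightarrow> (\<lambda>x. z1 x - z2 x) \<in> B"
proof
  assume "coset B z1 = coset B z2"
  moreover have "z1 \<in> coset B z1" unfolding coset_def by (rule image_eqI[OF _ assms(3)]) simp
  ultimately have "z1 \<in> coset B z2" by simp
  then obtain b where "b \<in> B" "z1 = (\<lambda>x. z2 x + b x)" unfolding coset_def by auto
  then show "(\<lambda>x. z1 x - z2 x) \<in> B" by simp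
next
  assume d: "(\<lambda>x. z1 x - z2 x) \<in> B"
  show "coset B z1 = coset B z2"
  proof
    show "coset B z1 \<subseteq> coset B z2"
    proof
      fix w assume "w \<in> coset B z1"
      then obtain b where b: "b \<in> B" "w = (\<lambda>x. z1 x + b x)" unfolding coset_def by auto
      have bb: "(\<lambda>x. (z1 x - z2 x) + b x) \<in> B" using assms(2)[OF d b(1)] by simp
      have weq: "w = (\<lambda>x. z2 x + ((z1 x - z2 x) + b x))" using b by (auto simp: fun_eq_iff)
      show "w \<in> coset B z2" unfolding coset_def by (rule rev_image_eqI[OF bb]) (simp add: weq)
    qed
  next
    show "coset B z2 \<subseteq> coset B z1"
    proof
      fix w assume "w \<in> coset B z2"
      then obtain b where b: "b \<in> B" "w = (\<lambda>x. z2 x + b x)" unfolding coset_def by auto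
      have bb: "(\<lambda>x. b x - (z1 x - z2 x)) \<in> B" using assms(1)[OF b(1) d] by simp
      have weq: "w = (\<lambda>x. z1 x + (b x - (z1 x - z2 x)))" using b by (auto simp: fun_eq_iff)
      show "w \<in> coset B z1" unfolding coset_def by (rule rev_image_eqI[OF bb]) (simp add: weq)
    qed
  qed
qed

lemma coset_lincomb_coset:
  assumes "\<And>b b'. b \<in> B \<Longrightarrow> b' \<in> B \<Longrightarrow> (\<lambda>x. a * b x + b' x) \<in> B"
    and "(\<lambda>_. 0) \<in> B"
  shows "coset_lincomb a (coset B z1) (coset B z2) = coset B (\<lambda>x. a * z1 x + z2 x)"
proof
  show "coset_lincomb a (coset B z1) (coset B z2) \<subseteq> coset B (\<lambda>x. a * z1 x + z2 x)"
  proof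
    fix w assume "w \<in> coset_lincomb a (coset B z1) (coset B z2)"
    then obtain b1 b2 where b: "b1 \<in> B" "b2 \<in> B"
      "w = (\<lambda>x. a * (z1 x + b1 x) + (z2 x + b2 x))"
      unfolding coset_lincomb_def coset_def by auto
    then have weq: "w = (\<lambda>x. (a * z1 x + z2 x) + (a * b1 x + b2 x))" by (auto simp: fun_eq_iff algebra_simps)
    show "w \<in> coset B (\<lambda>x. a * z1 x + z2 x)" unfolding coset_def
      by (rule image_eqI[OF _ assms(1)[OF b(1,2)]]) (simp add: weq)
  qed
next
  show "coset B (\<lambda>x. a * z1 x + z2 x) \<subseteq> coset_lincomb a (coset B z1) (coset B z2)"
  proof
    fix w assume "w \<in> coset B (\<lambda>x. a * z1 x + z2 x)"
    then obtain b where b: "b \<in> B" "w = (\<lambda>x. (a * z1 x + z2 x) + b x)" unfolding coset_def by auto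
    have "(\<lambda>x. z1 x + 0) \<in> coset B z1" unfolding coset_def by (rule image_eqI[OF _ assms(2)]) simp
    moreover have "(\<lambda>x. z2 x + b x) \<in> coset B z2" using b unfolding coset_def by blast
    moreover have "w = (\<lambda>x. a * (z1 x + 0) + (z2 x + b x))" using b by (auto simp: fun_eq_iff algebra_simps)
    ultimately show "w \<in> coset_lincomb a (coset B z1) (coset B z2)"
      unfolding coset_lincomb_def by (intro CollectI exI[where x="\<lambda>x. z1 x + 0"] exI[where x="\<lambda>x. z2 x + b x"]) simp
  qed
qed

lemma coset_bd_eq_iff:
  "coset (boundaries L k) z1 = coset (boundaries L k) z2 \<longleftrightarrow> (\<lambda>x. z1 x - z2 x) \<in> boundaries L k"
  by (rule coset_eq_iff) (auto intro: boundaries_diff boundaries_add)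

lemma coset_bd_lincomb:
  "coset_lincomb a (coset (boundaries L k) z1) (coset (boundaries L k) z2)
     = coset (boundaries L k) (\<lambda>x. a * z1 x + z2 x)"
  by (rule coset_lincomb_coset) (auto intro: boundaries_lc)

lemma pers_closed:
  assumes "U \<in> pers_homology K L k" "V \<in> pers_homology K L k"
  shows "coset_lincomb a U V \<in> pers_homology K L k"
proof -
  obtain z1 z2 where "z1 \<in> cycles K k" "z2 \<in> cycles K k" "U = coset (boundaries L k) z1"
    "V = coset (boundaries L k) z2" using assms unfolding pers_homology_def by auto
  then have "coset_lincomb a U V = coset (boundaries L k) (\<lambda>x. a * z1 x + z2 x)"
    by (simp add: coset_bd_lincomb)
  then show ?thesis unfolding pers_homology_def
    by (simp add: \<open>z1 \<in> cycles K k\<close> \<open>z2 \<in> cycles K k\<close> cycles_lc)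
qed

lemma quot_iso_trans:
  assumes "Q1 \<cong>\<^sub>Q Q2" "Q2 \<cong>\<^sub>Q Q3"
  shows "Q1 \<cong>\<^sub>Q Q3"
proof -
  obtain \<phi> where p: "bij_betw \<phi> Q1 Q2" "\<forall>a U V. U \<in> Q1 \<longrightarrow> V \<in> Q1 \<longrightarrow>
          \<phi> (coset_lincomb a U V) = coset_lincomb a (\<phi> U) (\<phi> V)"
    using assms(1) unfolding quot_iso_def by blast
  obtain \<psi> where q: "bij_betw \<psi> Q2 Q3" "\<forall>a U V. U \<in> Q2 \<longrightarrow> V \<in> Q2 \<longrightarrow>
          \<psi> (coset_lincomb a U V) = coset_lincomb a (\<psi> U) (\<psi> V)"
    using assms(2) unfolding quot_iso_def by blast
  have "bij_betw (\<psi> \<circ> \<phi>) Q1 Q3" using p(1) q(1) by (rule bij_betw_trans)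
  moreover have "\<forall>a U V. U \<in> Q1 \<longrightarrow> V \<in> Q1 \<longrightarrow>
          (\<psi> \<circ> \<phi>) (coset_lincomb a U V) = coset_lincomb a ((\<psi> \<circ> \<phi>) U) ((\<psi> \<circ> \<phi>) V)"
  proof (intro allI impI)
    fix a U V assume "U \<in> Q1" "V \<in> Q1"
    moreover then have "\<phi> U \<in> Q2" "\<phi> V \<in> Q2" using p(1) bij_betwE by blast+
    ultimately show "(\<psi> \<circ> \<phi>) (coset_lincomb a U V) = coset_lincomb a ((\<psi> \<circ> \<phi>) U) ((\<psi> \<circ> \<phi>) V)"
      using p(2) q(2) by simp
  qed
  ultimately show ?thesis unfolding quot_iso_def by blast
qed

lemma quot_iso_sym:
  assumes "Q1 \<cong>\<^sub>Q Q2"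
    and closed: "\<And>a U V. U \<in> Q1 \<Longrightarrow> V \<in> Q1 \<Longrightarrow> coset_lincomb a U V \<in> Q1"
  shows "Q2 \<cong>\<^sub>Q Q1"
proof -
  obtain \<phi> where p: "bij_betw \<phi> Q1 Q2" "\<forall>a U V. U \<in> Q1 \<longrightarrow> V \<in> Q1 \<longrightarrow>
          \<phi> (coset_lincomb a U V) = coset_lincomb a (\<phi> U) (\<phi> V)"
    using assms(1) unfolding quot_iso_def by blast
  define \<psi> where "\<psi> = the_inv_into Q1 \<phi>"
  have b: "bij_betw \<psi> Q2 Q1" unfolding \<psi>_def using p(1) by (rule bij_betw_the_inv_into)
  have "\<forall>a U V. U \<in> Q2 \<longrightarrow> V \<in> Q2 \<longrightarrow>
          \<psi> (coset_lincomb a U V) = coset_lincomb a (\<psi> U) (\<psi> V)"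
  proof (intro allI impI)
    fix a U V assume U: "U \<in> Q2" and V: "V \<in> Q2"
    have inj: "inj_on \<phi> Q1" using p(1) bij_betw_def by blast
    have U1: "\<psi> U \<in> Q1" "\<phi> (\<psi> U) = U"
      using bij_betwE[OF b] U f_the_inv_into_f_bij_betw[OF p(1) U] unfolding \<psi>_def by auto
    have V1: "\<psi> V \<in> Q1" "\<phi> (\<psi> V) = V"
      using bij_betwE[OF b] V f_the_inv_into_f_bij_betw[OF p(1) V] unfolding \<psi>_def by auto
    have "\<phi> (coset_lincomb a (\<psi> U) (\<psi> V)) = coset_lincomb a U V"
      using p(2) U1 V1 by simp
    moreover have "coset_lincomb a (\<psi> U) (\<psi> V) \<in> Q1" using closed U1 V1 by blast
    ultimately show "\<psi> (coset_lincomb a U V) = coset_lincomb a (\<psi> U) (\<psi> V)"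
      unfolding \<psi>_def using the_inv_into_f_f[OF inj] by metis
  qed
  then show ?thesis using b unfolding quot_iso_def by blast
qed

text \<open>Isomorphism induced by pairs of inclusions that are homology equivalences.\<close>

definition good :: "'v::linorder set set \<Rightarrow> 'v set set \<Rightarrow> 'f::field itself \<Rightarrow> bool" where
  "good K L T \<longleftrightarrow>
     (\<forall>k (z :: 'v set \<Rightarrow> 'f). z \<in> cycles L k \<longrightarrow> (\<exists>z'\<in>cycles K k. (\<lambda>x. z x - z' x) \<in> boundaries L k)) \<and>
     (\<forall>k (z :: 'v set \<Rightarrow> 'f). z \<in> cycles K k \<longrightarrow> z \<in> boundaries L k \<longrightarrow> z \<in> boundaries K k)"

lemma good_pers:
  assumes cK: "cplx K" and cK': "cplx K'" and cL: "cplx L" and cL': "cplx L'"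
    and KK': "K \<subseteq> K'" and LL': "L \<subseteq> L'" and KL: "K \<subseteq> L" and KL': "K' \<subseteq> L'"
    and g1: "good K L TYPE('f::field)" and g2: "good K' L' TYPE('f)"
  shows "(pers_homology K K' k :: ('v::linorder set \<Rightarrow> 'f) set set) \<cong>\<^sub>Q pers_homology L L' k"
proof -
  let ?BK = "boundaries K' k :: ('v set \<Rightarrow> 'f) set"
  let ?BL = "boundaries L' k :: ('v set \<Rightarrow> 'f) set"
  define \<phi> :: "('v set \<Rightarrow> 'f) set \<Rightarrow> ('v set \<Rightarrow> 'f) set" where "\<phi> U = coset ?BL (SOME z. z \<in> U)" for U
  have BKL: "?BK \<subseteq> ?BL" using boundaries_mono[OF cK' cL' KL'] .
  have phi: "\<phi> (coset ?BK z) = coset ?BL z" for z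
  proof -
    have "z \<in> coset ?BK z" unfolding coset_def by (rule image_eqI[where x="\<lambda>_. 0"]) simp_all
    then have "(SOME y. y \<in> coset ?BK z) \<in> coset ?BK z" by (rule someI[where P="\<lambda>y. y \<in> coset ?BK z"])
    then obtain b where b: "b \<in> ?BK" "(SOME y. y \<in> coset ?BK z) = (\<lambda>x. z x + b x)"
      unfolding coset_def by auto
    have "(\<lambda>x. (SOME y. y \<in> coset ?BK z) x - z x) \<in> ?BL" using b BKL by auto
    then show ?thesis unfolding \<phi>_def using coset_bd_eq_iff by blast
  qed
  have cyc1: "cycles K k \<subseteq> cycles K' k" "cycles K k \<subseteq> cycles L k"
    using cycles_mono[OF cK cK' KK'] cycles_mono[OF cK cL KL] by auto
  have inj: "inj_on \<phi> (pers_homology K K' k)"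
  proof (rule inj_onI)
    fix U V assume U: "U \<in> pers_homology K K' k" and V: "V \<in> pers_homology K K' k" and e: "\<phi> U = \<phi> V"
    obtain z1 z2 where z: "z1 \<in> cycles K k" "z2 \<in> cycles K k" "U = coset ?BK z1" "V = coset ?BK z2"
      using U V unfolding pers_homology_def by auto
    have "coset ?BL z1 = coset ?BL z2" using e z phi by simp
    then have d: "(\<lambda>x. z1 x - z2 x) \<in> ?BL" using coset_bd_eq_iff by blast
    have "(\<lambda>x. z1 x - z2 x) \<in> cycles K' k" using cyc1 z cycles_diff by blast
    then have "(\<lambda>x. z1 x - z2 x) \<in> ?BK" using g2 d unfolding good_def by blast
    then show "U = V" using z coset_bd_eq_iff by blast
  qed
  have img: "\<phi> ` pers_homology K K' k = pers_homology L L' k"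
  proof
    show "\<phi> ` pers_homology K K' k \<subseteq> pers_homology L L' k"
      using cyc1 phi unfolding pers_homology_def by auto
  next
    show "pers_homology L L' k \<subseteq> \<phi> ` pers_homology K K' k"
    proof
      fix W :: "('v set \<Rightarrow> 'f) set" assume "W \<in> pers_homology L L' k"
      then obtain w where w: "w \<in> cycles L k" "W = coset ?BL w" unfolding pers_homology_def by auto
      then obtain z where z: "z \<in> cycles K k" "(\<lambda>x. w x - z x) \<in> boundaries L k"
        using g1 unfolding good_def by blast
      then have "(\<lambda>x. w x - z x) \<in> ?BL" using boundaries_mono[OF cL cL' LL'] by auto
      then have "W = \<phi> (coset ?BK z)" using w phi coset_bd_eq_iff by metis
      moreover have "coset ?BK z \<in> pers_homology K K' k" using z unfolding pers_homology_def by auto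
      ultimately show "W \<in> \<phi> ` pers_homology K K' k" by blast
    qed
  qed
  have lin: "\<forall>a U V. U \<in> pers_homology K K' k \<longrightarrow> V \<in> pers_homology K K' k \<longrightarrow>
          \<phi> (coset_lincomb a U V) = coset_lincomb a (\<phi> U) (\<phi> V)"
  proof (intro allI impI)
    fix a :: 'f and U V :: "('v set \<Rightarrow> 'f) set"
    assume U: "U \<in> pers_homology K K' k" and V: "V \<in> pers_homology K K' k"
    obtain z1 z2 where z: "U = coset ?BK z1" "V = coset ?BK z2"
      using U V unfolding pers_homology_def by auto
    show "\<phi> (coset_lincomb a U V) = coset_lincomb a (\<phi> U) (\<phi> V)"
      unfolding z coset_bd_lincomb phi ..
  qed
  show ?thesis unfolding quot_iso_def bij_betw_def using inj img lin by blast
qed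

lemma chainmap_cycles_boundaries:
  fixes F :: "('v::linorder set \<Rightarrow> 'f::field) \<Rightarrow> ('w::linorder set \<Rightarrow> 'f)"
  assumes inj: "inj F" and F0: "F (\<lambda>_. 0) = (\<lambda>_. 0)"
    and comm: "\<And>c k. F (boundary K k c) = boundary K2 k (F c)"
    and ch: "\<And>k. F ` chains K k = chains K2 k"
  shows "F ` cycles K k = cycles K2 k" "F ` boundaries K k = boundaries K2 k"
proof -
  show "F ` cycles K k = cycles K2 k"
  proof
    show "F ` cycles K k \<subseteq> cycles K2 k"
      using ch comm F0 unfolding cycles_def by (auto simp del: boundary_zero) (metis)
  next
    show "cycles K2 k \<subseteq> F ` cycles K k"
    proof
      fix d :: "'w set \<Rightarrow> 'f" assume d: "d \<in> cycles K2 k"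
      then obtain c where c: "c \<in> chains K k" "d = F c" using ch unfolding cycles_def by blast
      then have "F (boundary K k c) = F (\<lambda>_. 0)" using comm d F0 unfolding cycles_def by auto
      then have "boundary K k c = (\<lambda>_. 0)" using inj by (simp add: inj_eq)
      then show "d \<in> F ` cycles K k" using c unfolding cycles_def by auto
    qed
  qed
  show "F ` boundaries K k = boundaries K2 k"
    unfolding boundaries_def image_image comm ch[symmetric, of "Suc k"] by simp
qed

lemma map_pers:
  fixes F :: "('v::linorder set \<Rightarrow> 'f::field) \<Rightarrow> ('w::linorder set \<Rightarrow> 'f)"
  assumes inj: "inj F" and lin: "\<And>a u v. F (\<lambda>x. a * u x + v x) = (\<lambda>x. a * F u x + F v x)"
    and cyc: "F ` cycles K k = cycles K2 k" and bd: "F ` boundaries K' k = boundaries K2' k"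
  shows "(pers_homology K K' k :: ('v set \<Rightarrow> 'f) set set) \<cong>\<^sub>Q (pers_homology K2 K2' k :: ('w set \<Rightarrow> 'f) set set)"
proof -
  have cos: "F ` coset B z = coset (F ` B) (F z)" for B z
  proof -
    have "F ` coset B z = (\<lambda>b. F (\<lambda>x. z x + b x)) ` B" unfolding coset_def image_image ..
    also have "\<dots> = (\<lambda>b. (\<lambda>x. F z x + F b x)) ` B" using lin[of 1 z] by simp
    also have "\<dots> = coset (F ` B) (F z)" unfolding coset_def image_image ..
    finally show ?thesis .
  qed
  have lc: "F ` coset_lincomb a U V = coset_lincomb a (F ` U) (F ` V)" for a U V
  proof
    show "F ` coset_lincomb a U V \<subseteq> coset_lincomb a (F ` U) (F ` V)"
      unfolding coset_lincomb_def using lin by blast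
    show "coset_lincomb a (F ` U) (F ` V) \<subseteq> F ` coset_lincomb a U V"
    proof
      fix w assume "w \<in> coset_lincomb a (F ` U) (F ` V)"
      then obtain u v where "u \<in> U" "v \<in> V" "w = (\<lambda>x. a * F u x + F v x)"
        unfolding coset_lincomb_def by blast
      then show "w \<in> F ` coset_lincomb a U V" unfolding coset_lincomb_def
        by (intro image_eqI[where x="\<lambda>x. a * u x + v x"]) (auto simp: lin)
    qed
  qed
  have bij: "bij_betw ((`) F) (pers_homology K K' k) (pers_homology K2 K2' k)"
  proof (rule bij_betw_imageI)
    show "inj_on ((`) F) (pers_homology K K' k)"
      by (rule inj_onI) (use inj in \<open>simp add: inj_image_eq_iff\<close>)
    show "(`) F ` pers_homology K K' k = pers_homology K2 K2' k"
      unfolding pers_homology_def image_image cos bd cyc[symmetric] by auto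
  qed
  show ?thesis unfolding quot_iso_def
    by (rule exI[where x="(`) F"]) (simp add: bij lc)
qed

definition sgnv :: "'v::linorder \<Rightarrow> 'v set \<Rightarrow> 'f::field" where
  "sgnv v \<rho> = (- 1) ^ card {u \<in> \<rho>. u < v}"

definition cone :: "'v::linorder \<Rightarrow> ('v set \<Rightarrow> 'f::field) \<Rightarrow> ('v set \<Rightarrow> 'f)" where
  "cone v c = (\<lambda>\<sigma>. if v \<in> \<sigma> \<and> \<sigma> - {v} \<noteq> {} then sgnv v (\<sigma> - {v}) * c (\<sigma> - {v}) else 0)"

definition aug :: "'v set set \<Rightarrow> ('v set \<Rightarrow> 'f::field) \<Rightarrow> 'f" where
  "aug A c = (\<Sum>\<sigma>\<in>simplices A 0. c \<sigma>)"

definition acyc_cplx :: "'v::linorder set set \<Rightarrow> 'f::field itself \<Rightarrow> bool" where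
  "acyc_cplx A T \<longleftrightarrow> A \<noteq> {} \<and>
     (\<forall>(c :: 'v set \<Rightarrow> 'f). c \<in> chains A 0 \<longrightarrow> aug A c = 0 \<longrightarrow> c \<in> boundaries A 0) \<and>
     (\<forall>k (c :: 'v set \<Rightarrow> 'f). c \<in> cycles A (Suc k) \<longrightarrow> c \<in> boundaries A (Suc k))"

lemma sgnv_sq: "sgnv v \<rho> * sgnv v \<rho> = (1::'f::field)"
  unfolding sgnv_def power_mult_distrib[symmetric] by simp

lemma sgnv_nz: "sgnv v \<rho> \<noteq> (0::'f::field)"
  unfolding sgnv_def by simp

lemma card_less_insert:
  assumes "finite S" "x \<notin> S"
  shows "card {w \<in> insert x S. w < u} = card {w \<in> S. w < u} + (if x < u then 1 else 0)"
proof (cases "x < u")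
  case True
  then have "{w \<in> insert x S. w < u} = insert x {w \<in> S. w < u}" by auto
  then show ?thesis using assms True by simp
next
  case False
  then have "{w \<in> insert x S. w < u} = {w \<in> S. w < u}" by auto
  then show ?thesis using False by simp
qed

lemma cone_lin: "cone v (\<lambda>x. a * c x + d x) = (\<lambda>x. a * cone v c x + cone v d x)"
  unfolding cone_def by (auto simp: fun_eq_iff algebra_simps)

lemma cone_scale: "cone v (\<lambda>x. a * c x) = (\<lambda>x. a * cone v c x)"
  unfolding cone_def by (auto simp: fun_eq_iff)

lemma cone_uminus: "cone v (\<lambda>x. - c x) = (\<lambda>x. - cone v c x)"
  unfolding cone_def by (auto simp: fun_eq_iff)

lemma boundary_outside: "\<tau> \<notin> K \<Longrightarrow> boundary K k c \<tau> = 0"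
  unfolding boundary_def by auto

lemma chains_outside: "c \<in> chains K k \<Longrightarrow> \<tau> \<notin> K \<Longrightarrow> c \<tau> = 0"
  unfolding chains_def simplices_def by auto

lemma chains_card: "c \<in> chains K k \<Longrightarrow> card \<tau> \<noteq> Suc k \<Longrightarrow> c \<tau> = 0"
  unfolding chains_def simplices_def by auto

context
  fixes K A L :: "'v::linorder set set" and v :: 'v
  assumes cK: "cplx K" and cA: "cplx A" and AK: "A \<subseteq> K" and vK: "\<And>\<sigma>. \<sigma> \<in> K \<Longrightarrow> v \<notin> \<sigma>"
    and Ldef: "L = K \<union> (insert v ` A) \<union> {{v}}"
begin

lemma Lmem: "\<sigma> \<in> L \<longleftrightarrow> \<sigma> \<in> K \<or> (v \<in> \<sigma> \<and> (\<sigma> = {v} \<or> \<sigma> - {v} \<in> A))"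
proof
  assume "\<sigma> \<in> L"
  then show "\<sigma> \<in> K \<or> (v \<in> \<sigma> \<and> (\<sigma> = {v} \<or> \<sigma> - {v} \<in> A))"
    unfolding Ldef using vK AK by (auto simp: insert_Diff_if)
next
  assume "\<sigma> \<in> K \<or> (v \<in> \<sigma> \<and> (\<sigma> = {v} \<or> \<sigma> - {v} \<in> A))"
  then show "\<sigma> \<in> L" unfolding Ldef
    by (metis Un_iff image_eqI insert_Diff singletonI)
qed

lemma vA: "\<sigma> \<in> A \<Longrightarrow> v \<notin> \<sigma>" using vK AK by auto

lemma AL: "A \<subseteq> L" and KL: "K \<subseteq> L" using AK unfolding Ldef by auto

lemma cL: "cplx L"
  unfolding cplx_def
proof (intro conjI ballI allI impI)
  show "finite L" unfolding Ldef using cplxD(1)[OF cK] cplxD(1)[OF cA] by auto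
next
  fix \<sigma> assume "\<sigma> \<in> L"
  then show "finite \<sigma>" "\<sigma> \<noteq> {}" unfolding Ldef using cplxD(2,3)[OF cK] cplxD(2)[OF cA] by auto
next
  fix \<sigma> \<tau> assume s: "\<sigma> \<in> L" and t: "\<tau> \<subseteq> \<sigma>" "\<tau> \<noteq> {}"
  show "\<tau> \<in> L"
  proof (cases "\<sigma> \<in> K")
    case True
    then show ?thesis using cplxD(4)[OF cK True t] KL by auto
  next
    case False
    then have v: "v \<in> \<sigma>" "\<sigma> = {v} \<or> \<sigma> - {v} \<in> A" using s Lmem by auto
    show ?thesis
    proof (cases "v \<in> \<tau>")
      case True
      then have "\<tau> = {v} \<or> \<tau> - {v} \<in> A" using v t cplxD(4)[OF cA, of "\<sigma> - {v}" "\<tau> - {v}"] by auto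
      then show ?thesis using Lmem True by auto
    next
      case False
      then have "\<tau> \<subseteq> \<sigma> - {v}" using t by auto
      then have "\<tau> \<in> A" using v t False cplxD(4)[OF cA, of "\<sigma> - {v}" \<tau>] by auto
      then show ?thesis using AL by auto
    qed
  qed
qed

lemma finL: "\<sigma> \<in> L \<Longrightarrow> finite \<sigma>" using cplxD(2)[OF cL] .

lemma cone_chain:
  assumes "c \<in> chains A k"
  shows "cone v c \<in> chains L (Suc k)"
  unfolding chains_def mem_Collect_eq
proof (intro allI impI)
  fix \<sigma> assume "cone v c \<sigma> \<noteq> 0"
  then have s: "v \<in> \<sigma>" "\<sigma> - {v} \<noteq> {}" "c (\<sigma> - {v}) \<noteq> 0" unfolding cone_def by (auto split: if_splits)
  then have "\<sigma> - {v} \<in> simplices A k" using assms unfolding chains_def by auto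
  then have "\<sigma> - {v} \<in> A" "card (\<sigma> - {v}) = Suc k" unfolding simplices_def by auto
  moreover have "finite (\<sigma> - {v})" using cplxD(2)[OF cA] calculation(1) by blast
  moreover have "finite \<sigma>" using calculation(3) by simp
  ultimately have "card \<sigma> = Suc (Suc k)" using s card_Suc_Diff1[of \<sigma> v] by simp
  then show "\<sigma> \<in> simplices L (Suc k)" unfolding simplices_def using s Lmem \<open>\<sigma> - {v} \<in> A\<close>
    by auto
qed

lemma cone_bd_nov:
  assumes c: "c \<in> chains A k" and v: "v \<notin> \<tau>"
  shows "boundary L (Suc k) (cone v c) \<tau> = c \<tau>"
proof (cases "\<tau> \<in> L \<and> card \<tau> = Suc k")
  case True
  then have fin: "finite \<tau>" using finL by auto
  let ?S = "{\<sigma> \<in> simplices L (Suc k). \<tau> \<subseteq> \<sigma>}"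
  let ?f = "\<lambda>\<sigma>. (- 1) ^ card {u \<in> \<sigma>. u < the_elem (\<sigma> - \<tau>)} * cone v c \<sigma>"
  have zero: "?f \<sigma> = 0" if "\<sigma> \<in> ?S" "\<sigma> \<noteq> insert v \<tau>" for \<sigma>
  proof (rule ccontr)
    assume "?f \<sigma> \<noteq> 0"
    then have s: "v \<in> \<sigma>" "c (\<sigma> - {v}) \<noteq> 0" unfolding cone_def by (auto split: if_splits)
    then have "card (\<sigma> - {v}) = Suc k" "\<sigma> - {v} \<in> A" using c unfolding chains_def simplices_def by auto
    moreover have "\<tau> \<subseteq> \<sigma> - {v}" using that v by auto
    moreover have "finite (\<sigma> - {v})" using cplxD(2)[OF cA] \<open>\<sigma> - {v} \<in> A\<close> by blast
    ultimately have "\<sigma> - {v} = \<tau>" using True by (metis card_subset_eq)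
    then show False using that s by auto
  qed
  have val: "?f (insert v \<tau>) = c \<tau>"
  proof -
    have "insert v \<tau> - \<tau> = {v}" using v by auto
    moreover have "{u \<in> insert v \<tau>. u < v} = {u \<in> \<tau>. u < v}" by auto
    moreover have "insert v \<tau> - {v} = \<tau>" using v by auto
    moreover have "\<tau> \<noteq> {}" using True cplxD(3)[OF cL] by auto
    ultimately have "?f (insert v \<tau>) = sgnv v \<tau> * sgnv v \<tau> * c \<tau>"
      unfolding cone_def sgnv_def by simp
    then show ?thesis by (simp add: sgnv_sq)
  qed
  show ?thesis
  proof (cases "insert v \<tau> \<in> ?S")
    case True2: True
    have "sum ?f ?S = ?f (insert v \<tau>)"
      using zero True2 by (intro sum.remove[THEN trans] sum.neutral) (auto intro: finite_subset[OF _ cplxD(1)[OF cL]] simp: simplices_def)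
    then show ?thesis using True val unfolding boundary_def by simp
  next
    case False2: False
    have "c \<tau> = 0"
    proof (rule ccontr)
      assume "c \<tau> \<noteq> 0"
      then have "\<tau> \<in> A" "card \<tau> = Suc k" using c unfolding chains_def simplices_def by auto
      then have "insert v \<tau> \<in> ?S" using Lmem v fin by (auto simp: simplices_def)
      then show False using False2 by simp
    qed
    moreover have "sum ?f ?S = 0" using zero False2 by (intro sum.neutral) auto
    ultimately show ?thesis using True unfolding boundary_def by simp
  qed
next
  case False
  have "c \<tau> = 0" using c False AL unfolding chains_def simplices_def by auto
  moreover have "boundary L (Suc k) (cone v c) \<tau> = 0" using False unfolding boundary_def by meson
  ultimately show ?thesis by simp
qed


lemma cone_bd_v:
  assumes c: "c \<in> chains A k" and v: "v \<in> \<tau>" and tL: "\<tau> \<in> L" and ct: "card \<tau> = Suc k"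
  shows "boundary L (Suc k) (cone v c) \<tau> = - sgnv v (\<tau> - {v}) *
     (\<Sum>\<sigma>' \<in> {\<sigma>' \<in> simplices A k. \<tau> - {v} \<subseteq> \<sigma>'}.
        (- 1) ^ card {u \<in> \<sigma>'. u < the_elem (\<sigma>' - (\<tau> - {v}))} * c \<sigma>')"
proof -
  define \<rho> where "\<rho> = \<tau> - {v}"
  have fin: "finite \<tau>" using finL tL by auto
  have vr: "v \<notin> \<rho>" and tr: "\<tau> = insert v \<rho>" and finr: "finite \<rho>" using v fin unfolding \<rho>_def by auto
  have cr: "card \<rho> = k" using ct fin v unfolding \<rho>_def by simp
  define T where "T = {\<sigma>' \<in> simplices A k. \<rho> \<subseteq> \<sigma>'}"
  have ST: "{\<sigma> \<in> simplices L (Suc k). \<tau> \<subseteq> \<sigma>} = insert v ` T"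
  proof
    show "{\<sigma> \<in> simplices L (Suc k). \<tau> \<subseteq> \<sigma>} \<subseteq> insert v ` T"
    proof
      fix \<sigma> assume "\<sigma> \<in> {\<sigma> \<in> simplices L (Suc k). \<tau> \<subseteq> \<sigma>}"
      then have s: "\<sigma> \<in> L" "card \<sigma> = Suc (Suc k)" "\<tau> \<subseteq> \<sigma>" unfolding simplices_def by auto
      have vs: "v \<in> \<sigma>" using s v by auto
      have fs: "finite \<sigma>" using s finL by auto
      have "\<sigma> \<noteq> {v}" using s by auto
      then have "\<sigma> - {v} \<in> A" using s(1) Lmem vK vs by auto
      moreover have "card (\<sigma> - {v}) = Suc k" using s fs vs by simp
      moreover have "\<rho> \<subseteq> \<sigma> - {v}" using s unfolding \<rho>_def by auto
      ultimately have "\<sigma> - {v} \<in> T" unfolding T_def simplices_def by auto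
      moreover have "\<sigma> = insert v (\<sigma> - {v})" using vs by auto
      ultimately show "\<sigma> \<in> insert v ` T" by blast
    qed
  next
    show "insert v ` T \<subseteq> {\<sigma> \<in> simplices L (Suc k). \<tau> \<subseteq> \<sigma>}"
    proof
      fix \<sigma> assume "\<sigma> \<in> insert v ` T"
      then obtain \<sigma>' where s: "\<sigma>' \<in> A" "card \<sigma>' = Suc k" "\<rho> \<subseteq> \<sigma>'" "\<sigma> = insert v \<sigma>'"
        unfolding T_def simplices_def by auto
      have "v \<notin> \<sigma>'" using vA s by auto
      moreover have "finite \<sigma>'" using s cplxD(2)[OF cA] by auto
      ultimately have "card \<sigma> = Suc (Suc k)" using s by simp
      moreover have "\<sigma> \<in> L" using s Lmem \<open>v \<notin> \<sigma>'\<close> by auto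
      moreover have "\<tau> \<subseteq> \<sigma>" using s tr by auto
      ultimately show "\<sigma> \<in> {\<sigma> \<in> simplices L (Suc k). \<tau> \<subseteq> \<sigma>}" unfolding simplices_def by auto
    qed
  qed
  have inj: "inj_on (insert v) T"
  proof (rule inj_onI)
    fix a b assume "a \<in> T" "b \<in> T" "insert v a = insert v b"
    moreover have "v \<notin> a" "v \<notin> b" using calculation vA unfolding T_def simplices_def by auto
    ultimately show "a = b" by (metis Diff_insert_absorb)
  qed
  have term1: "(- 1) ^ card {u \<in> insert v \<sigma>'. u < the_elem (insert v \<sigma>' - \<tau>)} * cone v c (insert v \<sigma>')
      = - sgnv v \<rho> * ((- 1) ^ card {u \<in> \<sigma>'. u < the_elem (\<sigma>' - \<rho>)} * c \<sigma>')" if s': "\<sigma>' \<in> T" for \<sigma>'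
  proof -
    have s: "\<sigma>' \<in> A" "card \<sigma>' = Suc k" "\<rho> \<subseteq> \<sigma>'" using s' unfolding T_def simplices_def by auto
    have vs: "v \<notin> \<sigma>'" using vA s by auto
    have fs: "finite \<sigma>'" using s cplxD(2)[OF cA] by auto
    have "card (\<sigma>' - \<rho>) = 1" using s cr finr by (simp add: card_Diff_subset)
    then obtain u where u: "\<sigma>' - \<rho> = {u}" by (auto simp: card_Suc_eq)
    have us: "u \<in> \<sigma>'" "u \<notin> \<rho>" "u \<noteq> v" using u vs by auto
    have su: "\<sigma>' = insert u \<rho>" using u s by auto
    have e1: "insert v \<sigma>' - \<tau> = {u}" using u tr vs by auto
    have e2: "insert v \<sigma>' - {v} = \<sigma>'" using vs by auto
    have ne: "\<sigma>' \<noteq> {}" using us by auto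
    have c1: "card {w \<in> insert v \<sigma>'. w < u} = card {w \<in> \<sigma>'. w < u} + (if v < u then 1 else 0)"
      using card_less_insert[OF fs vs] .
    have c2: "card {w \<in> \<sigma>'. w < v} = card {w \<in> \<rho>. w < v} + (if u < v then 1 else 0)"
      using card_less_insert[OF finr us(2), of v] su by simp
    have "cone v c (insert v \<sigma>') = sgnv v \<sigma>' * c \<sigma>'" unfolding cone_def using e2 ne by simp
    then show ?thesis unfolding e1 u the_elem_eq sgnv_def c1 using c2 us(3)
      by (cases "v < u") (auto simp: power_add)
  qed
  have "boundary L (Suc k) (cone v c) \<tau> =
      (\<Sum>\<sigma> \<in> insert v ` T. (- 1) ^ card {u \<in> \<sigma>. u < the_elem (\<sigma> - \<tau>)} * cone v c \<sigma>)"
    unfolding boundary_def using tL ct ST by simp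
  also have "\<dots> = (\<Sum>\<sigma>' \<in> T. (- 1) ^ card {u \<in> insert v \<sigma>'. u < the_elem (insert v \<sigma>' - \<tau>)} * cone v c (insert v \<sigma>'))"
    by (rule sum.reindex[OF inj, unfolded comp_def])
  also have "\<dots> = (\<Sum>\<sigma>' \<in> T. - sgnv v \<rho> * ((- 1) ^ card {u \<in> \<sigma>'. u < the_elem (\<sigma>' - \<rho>)} * c \<sigma>'))"
    by (rule sum.cong[OF refl], rule term1)
  also have "\<dots> = - sgnv v \<rho> * (\<Sum>\<sigma>' \<in> T. (- 1) ^ card {u \<in> \<sigma>'. u < the_elem (\<sigma>' - \<rho>)} * c \<sigma>')"
    by (simp add: sum_distrib_left)
  finally show ?thesis unfolding T_def \<rho>_def .
qed


lemma cone_bd_suc: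
  assumes c: "c \<in> chains A (Suc j)"
  shows "boundary L (Suc (Suc j)) (cone v c) = (\<lambda>\<tau>. c \<tau> - cone v (boundary A (Suc j) c) \<tau>)"
proof
  fix \<tau>
  show "boundary L (Suc (Suc j)) (cone v c) \<tau> = c \<tau> - cone v (boundary A (Suc j) c) \<tau>"
  proof (cases "v \<in> \<tau>")
    case False
    then show ?thesis using cone_bd_nov[OF c False] unfolding cone_def by simp
  next
    case True
    have ct: "c \<tau> = 0" using chains_outside[OF c] vA True by blast
    show ?thesis
    proof (cases "\<tau> \<in> L \<and> card \<tau> = Suc (Suc j)")
      case True2: True
      have fin: "finite \<tau>" using finL True2 by auto
      have cr: "card (\<tau> - {v}) = Suc j" using True2 True fin by simp
      have ne: "\<tau> - {v} \<noteq> {}"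
      proof
        assume h: "\<tau> - {v} = {}"
        have "card (\<tau> - {v}) = 0" by (simp only: h card.empty)
        then show False using cr by simp
      qed
      have "\<tau> \<noteq> {v}" using True2 by auto
      then have rA: "\<tau> - {v} \<in> A" using True2 True Lmem vK by auto
      have "cone v (boundary A (Suc j) c) \<tau> = sgnv v (\<tau> - {v}) *
        (\<Sum>\<sigma>' \<in> {\<sigma>' \<in> simplices A (Suc j). \<tau> - {v} \<subseteq> \<sigma>'}.
          (- 1) ^ card {u \<in> \<sigma>'. u < the_elem (\<sigma>' - (\<tau> - {v}))} * c \<sigma>')"
        unfolding cone_def boundary_def using True ne rA cr by simp
      then show ?thesis using cone_bd_v[OF c True, of] True2 ct by simp
    next
      case False2: False
      have "cone v (boundary A (Suc j) c) \<tau> = 0"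
      proof (cases "\<tau> - {v} \<in> A \<and> card (\<tau> - {v}) = Suc j")
        case True3: True
        then have "finite (\<tau> - {v})" using cplxD(2)[OF cA] by blast
        then have ft: "finite \<tau>" by simp
        have "card \<tau> = Suc (card (\<tau> - {v}))" using card_Suc_Diff1[OF ft True] by simp
        then have "card \<tau> = Suc (Suc j)" using True3 by simp
        moreover have "\<tau> \<in> L" using True3 True Lmem by auto
        ultimately show ?thesis using False2 by auto
      next
        case False
        then show ?thesis unfolding cone_def boundary_def by auto
      qed
      moreover have "boundary L (Suc (Suc j)) (cone v c) \<tau> = 0"
        using False2 unfolding boundary_def by meson
      ultimately show ?thesis using ct by simp
    qed
  qed
qed

lemma vpart:
  assumes c: "c \<in> chains A j" and acyc: "acyc_cplx A TYPE('f::field)"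
    and H: "\<And>\<tau>. v \<in> \<tau> \<Longrightarrow> \<tau> \<in> L \<Longrightarrow> card \<tau> = Suc j \<Longrightarrow> boundary L (Suc j) (cone v c) \<tau> = 0"
  shows "(c :: 'v set \<Rightarrow> 'f) \<in> boundaries A j"
proof (cases j)
  case 0
  have vL: "{v} \<in> L" using Lmem by auto
  have "boundary L (Suc 0) (cone v c) {v} = - sgnv v {} *
     (\<Sum>\<sigma>' \<in> {\<sigma>' \<in> simplices A 0. {v} - {v} \<subseteq> \<sigma>'}.
        (- 1) ^ card {u \<in> \<sigma>'. u < the_elem (\<sigma>' - ({v} - {v}))} * c \<sigma>')"
    using cone_bd_v[OF c[unfolded 0], of "{v}"] vL by simp
  also have "\<dots> = - (\<Sum>\<sigma>' \<in> simplices A 0. c \<sigma>')"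
  proof -
    have "(- 1) ^ card {u \<in> \<sigma>'. u < the_elem \<sigma>'} * c \<sigma>' = c \<sigma>'" if "\<sigma>' \<in> simplices A 0" for \<sigma>'
    proof -
      have "card \<sigma>' = 1" using that unfolding simplices_def by simp
      then obtain w where "\<sigma>' = {w}" by (rule card_1_singletonE)
      then have h: "{u \<in> \<sigma>'. u < the_elem \<sigma>'} = {}" by auto
      show ?thesis by (simp only: h card.empty power_0 mult_1_left)
    qed
    then have "(\<Sum>\<sigma>' \<in> simplices A 0. (- 1) ^ card {u \<in> \<sigma>'. u < the_elem \<sigma>'} * c \<sigma>') = (\<Sum>\<sigma>' \<in> simplices A 0. c \<sigma>')"
      by (rule sum.cong[OF refl])
    then show ?thesis unfolding sgnv_def by simp
  qed
  finally have "aug A c = 0" unfolding aug_def using H[of "{v}"] vL 0 by simp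
  then show ?thesis using acyc c 0 unfolding acyc_cplx_def by blast
next
  case (Suc i)
  have "c \<in> cycles A (Suc i)"
    unfolding cycles_def
  proof (intro CollectI conjI)
    show "c \<in> chains A (Suc i)" using c Suc by simp
    show "boundary A (Suc i) c = (\<lambda>_. 0)"
    proof
      fix \<rho>
      show "boundary A (Suc i) c \<rho> = 0"
      proof (cases "\<rho> \<in> A \<and> card \<rho> = Suc i")
        case True
        have vr: "v \<notin> \<rho>" using vA True by auto
        have fr: "finite \<rho>" using cplxD(2)[OF cA] True by auto
        have tL: "insert v \<rho> \<in> L" using Lmem True vr by auto
        have ct: "card (insert v \<rho>) = Suc j" using Suc True vr fr by simp
        have e: "insert v \<rho> - {v} = \<rho>" using vr by auto
        have "- sgnv v \<rho> * (\<Sum>\<sigma>' \<in> {\<sigma>' \<in> simplices A j. \<rho> \<subseteq> \<sigma>'}.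
            (- 1) ^ card {u \<in> \<sigma>'. u < the_elem (\<sigma>' - \<rho>)} * c \<sigma>') = 0"
          using cone_bd_v[OF c _ tL ct] H[OF _ tL ct] e by simp
        then have "(\<Sum>\<sigma>' \<in> {\<sigma>' \<in> simplices A j. \<rho> \<subseteq> \<sigma>'}.
            (- 1) ^ card {u \<in> \<sigma>'. u < the_elem (\<sigma>' - \<rho>)} * c \<sigma>') = 0"
          by (simp add: sgnv_nz)
        then show ?thesis unfolding boundary_def using True Suc by simp
      next
        case False
        then show ?thesis unfolding boundary_def by auto
      qed
    qed
  qed
  then show ?thesis using acyc Suc unfolding acyc_cplx_def by blast
qed

definition partK :: "('v set \<Rightarrow> 'f::field) \<Rightarrow> ('v set \<Rightarrow> 'f)" where
  "partK z = (\<lambda>\<sigma>. if v \<in> \<sigma> then 0 else z \<sigma>)"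

definition parta :: "('v set \<Rightarrow> 'f::field) \<Rightarrow> ('v set \<Rightarrow> 'f)" where
  "parta z = (\<lambda>\<rho>. if v \<notin> \<rho> \<and> \<rho> \<noteq> {} then sgnv v \<rho> * z (insert v \<rho>) else 0)"

lemma partK_chain: "z \<in> chains L k \<Longrightarrow> partK z \<in> chains K k"
  unfolding chains_def simplices_def partK_def using Lmem by auto

lemma parta_chain:
  assumes z: "z \<in> chains L (Suc j)"
  shows "parta z \<in> chains A j"
  unfolding chains_def mem_Collect_eq
proof (intro allI impI)
  fix \<rho> assume "parta z \<rho> \<noteq> 0"
  then have r: "v \<notin> \<rho>" "\<rho> \<noteq> {}" "z (insert v \<rho>) \<noteq> 0" unfolding parta_def by (auto split: if_splits)
  then have "insert v \<rho> \<in> L" "card (insert v \<rho>) = Suc (Suc j)" using z unfolding chains_def simplices_def by auto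
  moreover have "insert v \<rho> - {v} = \<rho>" using r by auto
  ultimately have "\<rho> \<in> A" "finite \<rho>" using Lmem r vK finL by auto
  then show "\<rho> \<in> simplices A j" using \<open>card (insert v \<rho>) = Suc (Suc j)\<close> r unfolding simplices_def by simp
qed

lemma decomp:
  assumes z: "z \<in> chains L (Suc j)"
  shows "z = (\<lambda>\<sigma>. partK z \<sigma> + cone v (parta z) \<sigma>)"
proof
  fix \<sigma>
  show "z \<sigma> = partK z \<sigma> + cone v (parta z) \<sigma>"
  proof (cases "v \<in> \<sigma>")
    case False
    then show ?thesis unfolding partK_def cone_def by simp
  next
    case True
    show ?thesis
    proof (cases "\<sigma> = {v}")
      case True2: True
      then have "z \<sigma> = 0" using z unfolding chains_def simplices_def by auto
      then show ?thesis using True2 unfolding partK_def cone_def by simp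
    next
      case False
      then have "\<sigma> - {v} \<noteq> {}" using True by auto
      moreover have "insert v (\<sigma> - {v}) = \<sigma>" using True by auto
      ultimately show ?thesis using True unfolding partK_def cone_def parta_def
        by (simp add: mult.assoc[symmetric] sgnv_sq)
    qed
  qed
qed

lemma bd_decomp:
  assumes zK: "zK \<in> chains K k" and a: "a \<in> chains A j"
  shows "boundary L k (\<lambda>\<sigma>. zK \<sigma> + cone v a \<sigma>) \<tau> = boundary K k zK \<tau> + boundary L k (cone v a) \<tau>"
  using boundary_add[of L k zK "cone v a"] boundary_mono[OF cK cL KL zK] by simp

lemma cone_bd_delta:
  assumes wA: "{w} \<in> A"
  shows "boundary L (Suc 0) (cone v (\<lambda>\<sigma>. if \<sigma> = {w} then 1 else 0)) \<tau> =
     (if \<tau> = {w} then 1 else if \<tau> = {v} then -1 else (0::'f::field))"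
proof -
  let ?d = "(\<lambda>\<sigma>. if \<sigma> = {w} then 1 else (0::'f))"
  have d: "?d \<in> chains A 0" unfolding chains_def simplices_def using wA by auto
  have wv: "w \<noteq> v" using vA wA by auto
  show ?thesis
  proof (cases "v \<in> \<tau>")
    case False
    then show ?thesis using cone_bd_nov[OF d False] by auto
  next
    case True
    show ?thesis
    proof (cases "\<tau> = {v}")
      case True2: True
      have vL: "{v} \<in> L" using Lmem by auto
      have "boundary L (Suc 0) (cone v ?d) {v} = - sgnv v {} *
         (\<Sum>\<sigma>' \<in> {\<sigma>' \<in> simplices A 0. {v} - {v} \<subseteq> \<sigma>'}.
            (- 1) ^ card {u \<in> \<sigma>'. u < the_elem (\<sigma>' - ({v} - {v}))} * ?d \<sigma>')"
        using cone_bd_v[OF d, of "{v}"] vL by simp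
      also have "\<dots> = - (\<Sum>\<sigma>' \<in> simplices A 0. (- 1) ^ card {u \<in> \<sigma>'. u < the_elem \<sigma>'} * ?d \<sigma>')"
        unfolding sgnv_def by simp
      also have "\<dots> = - ((- 1) ^ card {u \<in> {w}. u < the_elem {w}} * ?d {w})"
      proof -
        have "{w} \<in> simplices A 0" using wA unfolding simplices_def by simp
        moreover have "finite (simplices A 0)" using cplxD(1)[OF cA] unfolding simplices_def by simp
        ultimately show ?thesis
          by (subst sum.remove[of _ "{w}"]) (auto intro!: sum.neutral)
      qed
      also have "\<dots> = -1"
      proof -
        have h: "{u \<in> {w}. u < the_elem {w}} = {}" by auto
        have "?d {w} = 1" by simp
        then show ?thesis by (simp only: h card.empty power_0 mult_1_left)
      qed
      finally show ?thesis using True2 wv by simp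
    next
      case False
      then have "\<not> (\<tau> \<in> L \<and> card \<tau> = Suc 0)" using True by (auto simp: card_Suc_eq)
      then have "boundary L (Suc 0) (cone v ?d) \<tau> = 0" unfolding boundary_def by meson
      then show ?thesis using False True wv by auto
    qed
  qed
qed

lemma cone_good:
  assumes acyc: "acyc_cplx A TYPE('f::field)"
  shows "good K L TYPE('f)"
  unfolding good_def
proof (intro conjI allI impI)
  fix k and z :: "'v set \<Rightarrow> 'f"
  assume z: "z \<in> cycles L k"
  then have zc: "z \<in> chains L k" unfolding cycles_def by auto
  show "\<exists>z'\<in>cycles K k. (\<lambda>x. z x - z' x) \<in> boundaries L k"
  proof (cases k)
    case 0
    obtain \<sigma> where "\<sigma> \<in> A" using acyc unfolding acyc_cplx_def by auto
    then obtain w where "w \<in> \<sigma>" using cplxD(3)[OF cA] by auto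
    then have wA: "{w} \<in> A" using cplxD(4)[OF cA \<open>\<sigma> \<in> A\<close>, of "{w}"] by auto
    have wv: "w \<noteq> v" using vA wA by auto
    define t where "t = z {v}"
    define z' where "z' = (\<lambda>\<sigma>. partK z \<sigma> + t * (if \<sigma> = {w} then 1 else 0))"
    have "z' \<in> chains K 0"
      unfolding z'_def
      by (rule chains_add[OF partK_chain[OF zc[unfolded 0]]]) (use wA AK in \<open>auto simp: chains_def simplices_def\<close>)
    then have z'c: "z' \<in> cycles K 0" unfolding cycles_def using boundary_0[OF cK] by simp
    let ?d = "(\<lambda>\<sigma>. if \<sigma> = {w} then 1 else (0::'f))"
    have "(\<lambda>x. z x - z' x) = boundary L (Suc 0) (cone v (\<lambda>x. (- t) * ?d x))"
    proof
      fix \<tau>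
      have bd: "boundary L (Suc 0) (cone v (\<lambda>x. (- t) * ?d x)) \<tau> = - t * (if \<tau> = {w} then 1 else if \<tau> = {v} then -1 else 0)"
        unfolding cone_scale boundary_scale cone_bd_delta[OF wA, of \<tau>] ..
      show "z \<tau> - z' \<tau> = boundary L (Suc 0) (cone v (\<lambda>x. (- t) * ?d x)) \<tau>"
      proof (cases "v \<in> \<tau>")
        case False
        then show ?thesis unfolding bd z'_def partK_def using wv by auto
      next
        case True
        show ?thesis
        proof (cases "\<tau> = {v}")
          case True
          have "z \<tau> - z' \<tau> = t" using True wv unfolding z'_def partK_def t_def by auto
          then show ?thesis using bd True wv by simp
        next
          case False
          have "z \<tau> = 0"
          proof (rule ccontr)
            assume "z \<tau> \<noteq> 0"
            then have "card \<tau> = 1" using zc 0 unfolding chains_def simplices_def by auto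
            then show False using False \<open>v \<in> \<tau>\<close> by (auto simp: card_Suc_eq)
          qed
          then show ?thesis unfolding bd z'_def partK_def using wv True False by auto
        qed
      qed
    qed
    moreover have "cone v (\<lambda>x. (- t) * ?d x) \<in> chains L (Suc 0)"
      by (rule cone_chain) (use wA in \<open>auto simp: chains_def simplices_def\<close>)
    ultimately have "(\<lambda>x. z x - z' x) \<in> boundaries L 0" unfolding boundaries_def by auto
    then show ?thesis using z'c 0 by auto
  next
    case (Suc j)
    have zc': "z \<in> chains L (Suc j)" using zc Suc by simp
    define zK where "zK = partK z"
    define a where "a = parta z"
    have zKc: "zK \<in> chains K (Suc j)" unfolding zK_def using partK_chain[OF zc'] .
    have ac: "a \<in> chains A j" unfolding a_def using parta_chain[OF zc'] .
    have zdec: "z = (\<lambda>\<sigma>. zK \<sigma> + cone v a \<sigma>)" unfolding zK_def a_def using decomp[OF zc'] .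
    have bz: "boundary K (Suc j) zK \<tau> + boundary L (Suc j) (cone v a) \<tau> = 0" for \<tau>
    proof -
      have "boundary L (Suc j) z \<tau> = 0" using z Suc unfolding cycles_def by simp
      then show ?thesis using bd_decomp[OF zKc ac, of \<tau>] zdec by simp
    qed
    have "a \<in> boundaries A j"
    proof (rule vpart[OF ac acyc])
      fix \<tau> assume "v \<in> \<tau>" "\<tau> \<in> L" "card \<tau> = Suc j"
      then have "boundary K (Suc j) zK \<tau> = 0" using vK by (intro boundary_outside) auto
      then show "boundary L (Suc j) (cone v a) \<tau> = 0" using bz[of \<tau>] by simp
    qed
    then obtain b where bc: "b \<in> chains A (Suc j)" and ab: "a = boundary A (Suc j) b"
      unfolding boundaries_def by auto
    have bK: "boundary K (Suc j) b = a" using boundary_mono[OF cA cK AK bc] ab by simp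
    define z' where "z' = (\<lambda>\<sigma>. zK \<sigma> + b \<sigma>)"
    have z'c: "z' \<in> chains K (Suc j)" unfolding z'_def
      by (rule chains_add[OF zKc chains_mono[OF AK bc]])
    have "boundary K (Suc j) z' = (\<lambda>_. 0)"
    proof
      fix \<tau>
      have "boundary K (Suc j) z' \<tau> = boundary K (Suc j) zK \<tau> + a \<tau>"
        unfolding z'_def boundary_add bK ..
      also have "\<dots> = 0"
      proof (cases "v \<in> \<tau>")
        case False
        then show ?thesis using bz[of \<tau>] cone_bd_nov[OF ac False] by simp
      next
        case True
        then have "\<tau> \<notin> K" "\<tau> \<notin> A" using vK vA by auto
        then show ?thesis using boundary_outside chains_outside[OF ac] by simp
      qed
      finally show "boundary K (Suc j) z' \<tau> = 0" .
    qed
    then have z'cy: "z' \<in> cycles K k" using z'c Suc unfolding cycles_def by simp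
    have "(\<lambda>x. z x - z' x) = boundary L (Suc (Suc j)) (cone v (\<lambda>x. - b x))"
    proof -
      have "boundary L (Suc (Suc j)) (cone v (\<lambda>x. - b x)) = (\<lambda>x. - boundary L (Suc (Suc j)) (cone v b) x)"
        unfolding cone_uminus boundary_uminus ..
      also have "\<dots> = (\<lambda>x. cone v a x - b x)"
        unfolding cone_bd_suc[OF bc] ab by simp
      also have "\<dots> = (\<lambda>x. z x - z' x)"
        unfolding z'_def by (subst zdec) simp
      finally show ?thesis by simp
    qed
    moreover have "cone v (\<lambda>x. - b x) \<in> chains L (Suc (Suc j))"
      by (rule cone_chain) (rule chains_uminus[OF bc])
    ultimately have "(\<lambda>x. z x - z' x) \<in> boundaries L k" unfolding boundaries_def Suc by auto
    then show ?thesis using z'cy by auto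
  qed
next
  fix k and z :: "'v set \<Rightarrow> 'f"
  assume z: "z \<in> cycles K k" and zb: "z \<in> boundaries L k"
  then obtain c where cc: "c \<in> chains L (Suc k)" and zc: "z = boundary L (Suc k) c"
    unfolding boundaries_def by auto
  have zch: "z \<in> chains K k" using z unfolding cycles_def by auto
  define cK where "cK = partK c"
  define a where "a = parta c"
  have cKc: "cK \<in> chains K (Suc k)" unfolding cK_def using partK_chain[OF cc] .
  have ac: "a \<in> chains A k" unfolding a_def using parta_chain[OF cc] .
  have cdec: "c = (\<lambda>\<sigma>. cK \<sigma> + cone v a \<sigma>)" unfolding cK_def a_def using decomp[OF cc] .
  have bz: "z \<tau> = boundary K (Suc k) cK \<tau> + boundary L (Suc k) (cone v a) \<tau>" for \<tau>
    using bd_decomp[OF cKc ac, of \<tau>] cdec zc by simp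
  have "a \<in> boundaries A k"
  proof (rule vpart[OF ac acyc])
    fix \<tau> assume "v \<in> \<tau>" "\<tau> \<in> L" "card \<tau> = Suc k"
    then have "\<tau> \<notin> K" using vK by auto
    then have "boundary K (Suc k) cK \<tau> = 0" "z \<tau> = 0"
      using boundary_outside chains_outside[OF zch] by auto
    then show "boundary L (Suc k) (cone v a) \<tau> = 0" using bz[of \<tau>] by simp
  qed
  then obtain b where bc: "b \<in> chains A (Suc k)" and ab: "a = boundary A (Suc k) b"
    unfolding boundaries_def by auto
  have bK: "boundary K (Suc k) b = a" using boundary_mono[OF cA cK AK bc] ab by simp
  have "z = boundary K (Suc k) (\<lambda>\<sigma>. cK \<sigma> + b \<sigma>)"
  proof
    fix \<tau>
    show "z \<tau> = boundary K (Suc k) (\<lambda>\<sigma>. cK \<sigma> + b \<sigma>) \<tau>"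
    proof (cases "v \<in> \<tau>")
      case False
      then show ?thesis using bz[of \<tau>] cone_bd_nov[OF ac False] unfolding boundary_add bK by simp
    next
      case True
      then have "\<tau> \<notin> K" "\<tau> \<notin> A" using vK vA by auto
      then show ?thesis using boundary_outside chains_outside[OF ac] chains_outside[OF zch]
        unfolding boundary_add bK by simp
    qed
  qed
  moreover have "(\<lambda>\<sigma>. cK \<sigma> + b \<sigma>) \<in> chains K (Suc k)"
    by (rule chains_add[OF cKc chains_mono[OF AK bc]])
  ultimately show "z \<in> boundaries K k" unfolding boundaries_def by auto
qed

end

lemma good_refl: "good K K T"
  unfolding good_def
proof (intro conjI allI impI)
  fix k and z :: "'a set \<Rightarrow> 'b"
  assume "z \<in> cycles K k"
  then show "\<exists>z'\<in>cycles K k. (\<lambda>x. z x - z' x) \<in> boundaries K k"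
    by (intro bexI[where x=z]) simp_all
qed

lemma good_trans:
  assumes cK: "cplx K" and cL: "cplx L" and cM: "cplx M" and KL: "K \<subseteq> L" and LM: "L \<subseteq> M"
    and g1: "good K L (T :: 'f::field itself)" and g2: "good L M T"
  shows "good K M T"
  unfolding good_def
proof (intro conjI allI impI)
  fix k and z :: "'a set \<Rightarrow> 'f"
  assume z: "z \<in> cycles M k"
  obtain z1 where z1: "z1 \<in> cycles L k" "(\<lambda>x. z x - z1 x) \<in> boundaries M k"
    using g2 z unfolding good_def by blast
  obtain z2 where z2: "z2 \<in> cycles K k" "(\<lambda>x. z1 x - z2 x) \<in> boundaries L k"
    using g1 z1 unfolding good_def by blast
  have "(\<lambda>x. z1 x - z2 x) \<in> boundaries M k" using z2 boundaries_mono[OF cL cM LM] by auto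
  then have "(\<lambda>x. (z x - z1 x) + (z1 x - z2 x)) \<in> boundaries M k"
    using boundaries_add z1 by blast
  then show "\<exists>z'\<in>cycles K k. (\<lambda>x. z x - z' x) \<in> boundaries M k" using z2 by (intro bexI[of _ z2]) simp_all
next
  fix k and z :: "'a set \<Rightarrow> 'f"
  assume z: "z \<in> cycles K k" "z \<in> boundaries M k"
  then have "z \<in> cycles L k" using cycles_mono[OF cK cL KL] by auto
  then have "z \<in> boundaries L k" using g2 z unfolding good_def by blast
  then show "z \<in> boundaries K k" using g1 z unfolding good_def by blast
qed

lemma aug_boundary:
  assumes cA: "cplx A"
  shows "aug A (boundary A (Suc 0) b) = (0::'f::field)"
proof -
  have finS: "finite (simplices A k)" for k using cplxD(1)[OF cA] unfolding simplices_def by simp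
  let ?f = "\<lambda>\<tau> \<sigma>. (- 1) ^ card {u \<in> \<sigma>. u < the_elem (\<sigma> - \<tau>)} * (b \<sigma> :: 'f)"
  have "aug A (boundary A (Suc 0) b) = (\<Sum>\<tau>\<in>simplices A 0. \<Sum>\<sigma>\<in>{\<sigma> \<in> simplices A (Suc 0). \<tau> \<subseteq> \<sigma>}. ?f \<tau> \<sigma>)"
    unfolding aug_def boundary_def by (intro sum.cong refl) (auto simp: simplices_def)
  also have "\<dots> = (\<Sum>\<sigma>\<in>simplices A (Suc 0). \<Sum>\<tau>\<in>{\<tau> \<in> simplices A 0. \<tau> \<subseteq> \<sigma>}. ?f \<tau> \<sigma>)"
    by (rule sum.swap_restrict[OF finS finS])
  also have "\<dots> = 0"
  proof (rule sum.neutral, rule ballI)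
    fix \<sigma> assume s: "\<sigma> \<in> simplices A (Suc 0)"
    then have "card \<sigma> = 2" "\<sigma> \<in> A" unfolding simplices_def by auto
    obtain x0 y0 where "\<sigma> = {x0, y0}" "x0 \<noteq> y0" using \<open>card \<sigma> = 2\<close> card_2_iff by metis
    then obtain x y where xy: "\<sigma> = {x, y}" "x < y"
      by (cases "x0 < y0") (auto simp: insert_commute linorder_neq_iff)
    have "{\<tau> \<in> simplices A 0. \<tau> \<subseteq> \<sigma>} = {{x}, {y}}"
    proof
      show "{\<tau> \<in> simplices A 0. \<tau> \<subseteq> \<sigma>} \<subseteq> {{x}, {y}}"
        unfolding xy simplices_def by (auto simp: card_Suc_eq)
      show "{{x}, {y}} \<subseteq> {\<tau> \<in> simplices A 0. \<tau> \<subseteq> \<sigma>}"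
        using cplxD(4)[OF cA \<open>\<sigma> \<in> A\<close>] unfolding xy simplices_def by auto
    qed
    moreover have e1: "?f {x} \<sigma> = - b \<sigma>"
    proof -
      have "\<sigma> - {x} = {y}" using xy by auto
      moreover have "{u \<in> \<sigma>. u < y} = {x}" using xy by auto
      ultimately show ?thesis by simp
    qed
    moreover have e2: "?f {y} \<sigma> = b \<sigma>"
    proof -
      have "\<sigma> - {y} = {x}" using xy by auto
      moreover have h: "{u \<in> \<sigma>. u < x} = {}" using xy by auto
      ultimately show ?thesis by (simp only: the_elem_eq h card.empty power_0 mult_1_left)
    qed
    moreover have "{x} \<noteq> {y}" using xy by auto
    ultimately show "(\<Sum>\<tau>\<in>{\<tau> \<in> simplices A 0. \<tau> \<subseteq> \<sigma>}. ?f \<tau> \<sigma>) = 0"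
      by simp
  qed
  finally show ?thesis .
qed

lemma aug_diff: "aug A (\<lambda>x. c x - d x) = aug A c - aug A d"
  unfolding aug_def by (simp add: sum_subtractf)

lemma aug_mono:
  assumes "cplx A" "D \<subseteq> A" "c \<in> chains D 0"
  shows "aug A c = aug D c"
  unfolding aug_def
  by (rule sum.mono_neutral_right) (use assms cplxD(1)[OF assms(1)] in \<open>auto simp: simplices_def chains_def\<close>)

lemma acyclic_transfer:
  assumes cD: "cplx D" and cA: "cplx A" and DA: "D \<subseteq> A" and g: "good D A TYPE('f::field)"
    and acD: "acyc_cplx D TYPE('f)"
  shows "acyc_cplx A TYPE('f)"
  unfolding acyc_cplx_def
proof (intro conjI allI impI)
  show "A \<noteq> {}" using acD DA unfolding acyc_cplx_def by auto
next
  fix c :: "'a set \<Rightarrow> 'f"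
  assume c: "c \<in> chains A 0" "aug A c = 0"
  then have "c \<in> cycles A 0" unfolding cycles_def using boundary_0[OF cA] by simp
  then obtain c' where c': "c' \<in> cycles D 0" "(\<lambda>x. c x - c' x) \<in> boundaries A 0"
    using g unfolding good_def by blast
  then obtain b where b: "b \<in> chains A (Suc 0)" "(\<lambda>x. c x - c' x) = boundary A (Suc 0) b"
    unfolding boundaries_def by auto
  have "aug A (\<lambda>x. c x - c' x) = 0" using b aug_boundary[OF cA] by simp
  then have "aug A c' = 0" using c aug_diff[of A c c'] by simp
  moreover have "c' \<in> chains D 0" using c' unfolding cycles_def by auto
  ultimately have "aug D c' = 0" using aug_mono[OF cA DA \<open>c' \<in> chains D 0\<close>] by simp
  then have "c' \<in> boundaries D 0" using acD \<open>c' \<in> chains D 0\<close> unfolding acyc_cplx_def by blast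
  then have "c' \<in> boundaries A 0" using boundaries_mono[OF cD cA DA] by auto
  then have "(\<lambda>x. (c x - c' x) + c' x) \<in> boundaries A 0" using boundaries_add c' by blast
  then show "c \<in> boundaries A 0" by simp
next
  fix k and c :: "'a set \<Rightarrow> 'f"
  assume c: "c \<in> cycles A (Suc k)"
  then obtain c' where c': "c' \<in> cycles D (Suc k)" "(\<lambda>x. c x - c' x) \<in> boundaries A (Suc k)"
    using g unfolding good_def by blast
  then have "c' \<in> boundaries D (Suc k)" using acD unfolding acyc_cplx_def by blast
  then have "c' \<in> boundaries A (Suc k)" using boundaries_mono[OF cD cA DA] by auto
  then have "(\<lambda>x. (c x - c' x) + c' x) \<in> boundaries A (Suc k)" using boundaries_add c' by blast
  then show "c \<in> boundaries A (Suc k)" by simp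
qed

definition full :: "'a set \<Rightarrow> 'a set set" where
  "full S = {T. T \<noteq> {} \<and> T \<subseteq> S}"

lemma cplx_full: "finite S \<Longrightarrow> cplx (full S)"
  unfolding cplx_def full_def by (auto intro: finite_subset)

lemma acyclic_full:
  assumes "finite S" "S \<noteq> {}"
  shows "acyc_cplx (full (S :: 'v::linorder set)) TYPE('f::field)"
  using assms
proof (induction S rule: finite_ne_induct)
  case (singleton w)
  have fw: "full {w} = {{w}}" unfolding full_def by auto
  show ?case
    unfolding acyc_cplx_def
  proof (intro conjI allI impI)
    show "full {w} \<noteq> {}" unfolding fw by simp
  next
    fix c :: "'v set \<Rightarrow> 'f"
    assume c: "c \<in> chains (full {w}) 0" "aug (full {w}) c = 0"
    have "simplices (full {w}) 0 = {{w}}" unfolding fw simplices_def by auto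
    then have "c {w} = 0" using c unfolding aug_def by simp
    then have "c = (\<lambda>_. 0)" using c unfolding fw chains_def simplices_def by auto
    then show "c \<in> boundaries (full {w}) 0" by simp
  next
    fix k and c :: "'v set \<Rightarrow> 'f"
    assume c: "c \<in> cycles (full {w}) (Suc k)"
    have "c \<sigma> = 0" for \<sigma>
    proof (rule ccontr)
      assume "c \<sigma> \<noteq> 0"
      then have "\<sigma> = {w}" "card \<sigma> = Suc (Suc k)" using c unfolding fw cycles_def chains_def simplices_def by auto
      then show False by simp
    qed
    then have "c = (\<lambda>_. 0)" by auto
    then show "c \<in> boundaries (full {w}) (Suc k)" by simp
  qed
next
  case (insert v F)
  have eq: "full (insert v F) = full F \<union> insert v ` full F \<union> {{v}}"
  proof
    show "full (insert v F) \<subseteq> full F \<union> insert v ` full F \<union> {{v}}"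
    proof
      fix T assume T: "T \<in> full (insert v F)"
      show "T \<in> full F \<union> insert v ` full F \<union> {{v}}"
      proof (cases "v \<in> T")
        case True
        show ?thesis
        proof (cases "T = {v}")
          case False
          then have "T - {v} \<in> full F" "T = insert v (T - {v})" using T True unfolding full_def by auto
          then show ?thesis by blast
        qed simp
      next
        case False
        then show ?thesis using T unfolding full_def by auto
      qed
    qed
    show "full F \<union> insert v ` full F \<union> {{v}} \<subseteq> full (insert v F)"
      unfolding full_def by auto
  qed
  have vF: "\<And>\<sigma>. \<sigma> \<in> full F \<Longrightarrow> v \<notin> \<sigma>" using insert unfolding full_def by auto
  have g: "good (full F) (full (insert v F)) TYPE('f)"
    by (rule cone_good[OF cplx_full[OF insert(1)] cplx_full[OF insert(1)] subset_refl vF eq insert(4)])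
  show ?case
  proof (rule acyclic_transfer[OF cplx_full[OF insert(1)] cplx_full _ g insert(4)])
    show "finite (insert v F)" using insert(1) by simp
    show "full F \<subseteq> full (insert v F)" unfolding full_def by auto
  qed
qed

definition ZJ :: "'v set \<Rightarrow> ('v \<times> 'v) set \<Rightarrow> 'v set \<Rightarrow> 'v set set" where
  "ZJ Iv R J = {T. T \<noteq> {} \<and> T \<inter> Iv \<subseteq> J \<and> (\<exists>x i. insert x (T - Iv) \<times> insert i (T \<inter> Iv) \<subseteq> R)}"

definition Zf :: "'v set \<Rightarrow> ('v \<times> 'v) set \<Rightarrow> 'v set set" where
  "Zf Iv R = {T. T \<noteq> {} \<and> (\<exists>x i. insert x (T - Iv) \<times> insert i (T \<inter> Iv) \<subseteq> R)}"

lemma ZJ_sub: "T \<in> ZJ Iv R J \<Longrightarrow> T \<subseteq> Domain R \<union> Range R"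
proof
  fix y assume T: "T \<in> ZJ Iv R J" and y: "y \<in> T"
  then obtain x i where xi: "insert x (T - Iv) \<times> insert i (T \<inter> Iv) \<subseteq> R" unfolding ZJ_def by blast
  show "y \<in> Domain R \<union> Range R"
  proof (cases "y \<in> Iv")
    case True
    then have "(x, y) \<in> R" using xi y by auto
    then show ?thesis by auto
  next
    case False
    then have "(y, i) \<in> R" using xi y by auto
    then show ?thesis by auto
  qed
qed

lemma cplx_ZJ:
  assumes "finite R"
  shows "cplx (ZJ Iv R J)"
  unfolding cplx_def
proof (intro conjI ballI allI impI)
  have fD: "finite (Domain R \<union> Range R)" using assms by (simp add: finite_Domain finite_Range)
  have "ZJ Iv R J \<subseteq> Pow (Domain R \<union> Range R)" using ZJ_sub by (intro subsetI PowI) blast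
  then show "finite (ZJ Iv R J)" using fD by (meson finite_Pow_iff finite_subset)
next
  fix \<sigma> assume s: "\<sigma> \<in> ZJ Iv R J"
  have fD: "finite (Domain R \<union> Range R)" using assms by (simp add: finite_Domain finite_Range)
  show "finite \<sigma>" using ZJ_sub[OF s] fD by (rule finite_subset)
  show "\<sigma> \<noteq> {}" using s unfolding ZJ_def by simp
next
  fix \<sigma> \<tau> assume s: "\<sigma> \<in> ZJ Iv R J" and t: "\<tau> \<subseteq> \<sigma>" "\<tau> \<noteq> {}"
  from s obtain x i where xi: "insert x (\<sigma> - Iv) \<times> insert i (\<sigma> \<inter> Iv) \<subseteq> R" and sJ: "\<sigma> \<inter> Iv \<subseteq> J"
    unfolding ZJ_def by auto
  have "insert x (\<tau> - Iv) \<times> insert i (\<tau> \<inter> Iv) \<subseteq> insert x (\<sigma> - Iv) \<times> insert i (\<sigma> \<inter> Iv)"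
    using t by auto
  then have "insert x (\<tau> - Iv) \<times> insert i (\<tau> \<inter> Iv) \<subseteq> R" using xi by (rule subset_trans)
  moreover have "\<tau> \<inter> Iv \<subseteq> J" using sJ t by auto
  ultimately show "\<tau> \<in> ZJ Iv R J" unfolding ZJ_def using t(2) by auto
qed

lemma ZJ_mono_R:
  assumes "R \<subseteq> R'" shows "ZJ Iv R J \<subseteq> ZJ Iv R' J"
proof
  fix T assume "T \<in> ZJ Iv R J"
  then obtain x i where "T \<noteq> {}" "T \<inter> Iv \<subseteq> J" "insert x (T - Iv) \<times> insert i (T \<inter> Iv) \<subseteq> R"
    unfolding ZJ_def by blast
  moreover from this(3) have "insert x (T - Iv) \<times> insert i (T \<inter> Iv) \<subseteq> R'" using assms by (rule subset_trans)
  ultimately show "T \<in> ZJ Iv R' J" unfolding ZJ_def by blast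
qed

lemma ZJ_mono_J: "J \<subseteq> J' \<Longrightarrow> ZJ Iv R J \<subseteq> ZJ Iv R J'"
  unfolding ZJ_def by auto

lemma ZJ_Range: "ZJ Iv R (Range R) = Zf Iv R"
proof
  show "ZJ Iv R (Range R) \<subseteq> Zf Iv R" unfolding ZJ_def Zf_def by auto
  show "Zf Iv R \<subseteq> ZJ Iv R (Range R)"
  proof
    fix T assume "T \<in> Zf Iv R"
    then obtain x i where "T \<noteq> {}" "insert x (T - Iv) \<times> insert i (T \<inter> Iv) \<subseteq> R" unfolding Zf_def by auto
    moreover then have "T \<inter> Iv \<subseteq> Range R" by auto
    ultimately show "T \<in> ZJ Iv R (Range R)" unfolding ZJ_def by auto
  qed
qed

lemma Zf_swap: "Zf (- Iv) (R\<inverse>) = Zf Iv R"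
proof -
  have "(\<exists>x i. insert x (T - - Iv) \<times> insert i (T \<inter> - Iv) \<subseteq> R\<inverse>) \<longleftrightarrow>
        (\<exists>x i. insert x (T - Iv) \<times> insert i (T \<inter> Iv) \<subseteq> R)" for T
  proof -
    have a: "T - - Iv = T \<inter> Iv" "T \<inter> - Iv = T - Iv" by auto
    have b: "(A \<times> B \<subseteq> R\<inverse>) \<longleftrightarrow> (B \<times> A \<subseteq> R)" for A B by auto
    show ?thesis unfolding a b by auto
  qed
  then show ?thesis unfolding Zf_def by auto
qed

lemma dowker_step:
  assumes RI: "R \<subseteq> (- Iv) \<times> Iv" and \<alpha>R: "\<alpha> \<in> Range R" and \<alpha>J: "\<alpha> \<notin> J"
  shows "ZJ Iv R (insert \<alpha> J) = ZJ Iv R J \<union> insert \<alpha> ` ZJ Iv {p \<in> R. (fst p, \<alpha>) \<in> R} J \<union> {{\<alpha>}}"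
proof -
  let ?R = "{p \<in> R. (fst p, \<alpha>) \<in> R}"
  have \<alpha>I: "\<alpha> \<in> Iv" using RI \<alpha>R by auto
  show ?thesis
  proof
    show "ZJ Iv R (insert \<alpha> J) \<subseteq> ZJ Iv R J \<union> insert \<alpha> ` ZJ Iv ?R J \<union> {{\<alpha>}}"
    proof
      fix T assume T: "T \<in> ZJ Iv R (insert \<alpha> J)"
      then obtain x i where xi: "insert x (T - Iv) \<times> insert i (T \<inter> Iv) \<subseteq> R" and TJ: "T \<inter> Iv \<subseteq> insert \<alpha> J"
        and Tne: "T \<noteq> {}" unfolding ZJ_def by blast
      show "T \<in> ZJ Iv R J \<union> insert \<alpha> ` ZJ Iv ?R J \<union> {{\<alpha>}}"
      proof (cases "\<alpha> \<in> T")
        case False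
        then have "T \<inter> Iv \<subseteq> J" using TJ by auto
        then show ?thesis using xi Tne unfolding ZJ_def by blast
      next
        case True
        show ?thesis
        proof (cases "T = {\<alpha>}")
          case False
          define T' where "T' = T - {\<alpha>}"
          have ne: "T' \<noteq> {}" using False True unfolding T'_def by auto
          have e1: "T' - Iv = T - Iv" using \<alpha>I unfolding T'_def by auto
          have e2: "insert \<alpha> (T' \<inter> Iv) \<subseteq> T \<inter> Iv" using True \<alpha>I unfolding T'_def by auto
          have "insert x (T' - Iv) \<times> insert \<alpha> (T' \<inter> Iv) \<subseteq> ?R"
          proof
            fix p assume p: "p \<in> insert x (T' - Iv) \<times> insert \<alpha> (T' \<inter> Iv)"
            then have "p \<in> R" using xi e1 e2 by auto
            moreover have "(fst p, \<alpha>) \<in> R" using p xi e1 e2 by auto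
            ultimately show "p \<in> ?R" by simp
          qed
          moreover have "T' \<inter> Iv \<subseteq> J" using TJ unfolding T'_def by auto
          ultimately have "T' \<in> ZJ Iv ?R J" using ne unfolding ZJ_def by blast
          moreover have "T = insert \<alpha> T'" using True unfolding T'_def by auto
          ultimately show ?thesis by blast
        qed simp
      qed
    qed
  next
    show "ZJ Iv R J \<union> insert \<alpha> ` ZJ Iv ?R J \<union> {{\<alpha>}} \<subseteq> ZJ Iv R (insert \<alpha> J)"
    proof
      fix T assume "T \<in> ZJ Iv R J \<union> insert \<alpha> ` ZJ Iv ?R J \<union> {{\<alpha>}}"
      then consider "T \<in> ZJ Iv R J" | T' where "T' \<in> ZJ Iv ?R J" "T = insert \<alpha> T'" | "T = {\<alpha>}" by blast
      then show "T \<in> ZJ Iv R (insert \<alpha> J)"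
      proof cases
        case 1
        then show ?thesis using ZJ_mono_J[of J "insert \<alpha> J"] by blast
      next
        case (2 T')
        then obtain x i where xi: "insert x (T' - Iv) \<times> insert i (T' \<inter> Iv) \<subseteq> ?R" and TJ: "T' \<inter> Iv \<subseteq> J"
          unfolding ZJ_def by blast
        have e1: "T - Iv = T' - Iv" "T \<inter> Iv = insert \<alpha> (T' \<inter> Iv)" using 2 \<alpha>I by auto
        have "insert x (T - Iv) \<times> insert \<alpha> (T \<inter> Iv) \<subseteq> R"
          unfolding e1 using xi by auto
        moreover have "T \<inter> Iv \<subseteq> insert \<alpha> J" using e1 TJ by auto
        ultimately show ?thesis using 2 unfolding ZJ_def by blast
      next
        case 3
        obtain x where "(x, \<alpha>) \<in> R" using \<alpha>R by auto
        moreover have "{\<alpha>} - Iv = {}" "{\<alpha>} \<inter> Iv = {\<alpha>}" using \<alpha>I by auto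
        ultimately show ?thesis using 3 unfolding ZJ_def by auto
      qed
    qed
  qed
qed

lemma ZJ_empty_alpha:
  assumes RI: "R \<subseteq> (- Iv) \<times> Iv"
  shows "ZJ Iv {p \<in> R. (fst p, \<alpha>) \<in> R} {} = full {x. (x, \<alpha>) \<in> R}"
proof
  show "ZJ Iv {p \<in> R. (fst p, \<alpha>) \<in> R} {} \<subseteq> full {x. (x, \<alpha>) \<in> R}"
  proof
    fix T assume "T \<in> ZJ Iv {p \<in> R. (fst p, \<alpha>) \<in> R} {}"
    then obtain x i where T: "T \<noteq> {}" "T \<inter> Iv = {}" "insert x (T - Iv) \<times> insert i (T \<inter> Iv) \<subseteq> {p \<in> R. (fst p, \<alpha>) \<in> R}"
      unfolding ZJ_def by blast
    have "T \<subseteq> {x. (x, \<alpha>) \<in> R}"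
    proof
      fix y assume y: "y \<in> T"
      then have "y \<in> T - Iv" using T(2) by auto
      then have "(y, i) \<in> {p \<in> R. (fst p, \<alpha>) \<in> R}" using T(3) by blast
      then show "y \<in> {x. (x, \<alpha>) \<in> R}" by simp
    qed
    then show "T \<in> full {x. (x, \<alpha>) \<in> R}" unfolding full_def using T(1) by auto
  qed
next
  show "full {x. (x, \<alpha>) \<in> R} \<subseteq> ZJ Iv {p \<in> R. (fst p, \<alpha>) \<in> R} {}"
  proof
    fix T assume T: "T \<in> full {x. (x, \<alpha>) \<in> R}"
    then have Tn: "T \<noteq> {}" "T \<subseteq> {x. (x, \<alpha>) \<in> R}" unfolding full_def by auto
    then have "T \<inter> Iv = {}" using RI by auto
    moreover obtain x where "x \<in> T" using Tn by auto
    moreover have "insert x (T - Iv) \<times> insert \<alpha> (T \<inter> Iv) \<subseteq> {p \<in> R. (fst p, \<alpha>) \<in> R}"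
      using calculation Tn by auto
    ultimately show "T \<in> ZJ Iv {p \<in> R. (fst p, \<alpha>) \<in> R} {}" unfolding ZJ_def using Tn by blast
  qed
qed

lemma dowker_J:
  assumes "finite J"
  shows "\<forall>R. finite R \<and> R \<subseteq> (- Iv) \<times> Iv \<longrightarrow> good (ZJ Iv R {}) (ZJ Iv R J) TYPE('f::field)"
  using assms
proof (induction J rule: finite_induct)
  case empty
  then show ?case using good_refl by blast
next
  case (insert \<alpha> J)
  show ?case
  proof (intro allI impI)
    fix R :: "('a \<times> 'a) set"
    assume R: "finite R \<and> R \<subseteq> (- Iv) \<times> Iv"
    have IH: "good (ZJ Iv R {}) (ZJ Iv R J) TYPE('f)" using insert(3) R by blast
    show "good (ZJ Iv R {}) (ZJ Iv R (insert \<alpha> J)) TYPE('f)"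
    proof (cases "\<alpha> \<in> Range R")
      case False
      have "ZJ Iv R (insert \<alpha> J) = ZJ Iv R J"
        unfolding ZJ_def using False by blast
      then show ?thesis using IH by simp
    next
      case True
      let ?R = "{p \<in> R. (fst p, \<alpha>) \<in> R}"
      have \<alpha>I: "\<alpha> \<in> Iv" using R True by auto
      have R': "finite ?R \<and> ?R \<subseteq> (- Iv) \<times> Iv" using R by auto
      have IH': "good (ZJ Iv ?R {}) (ZJ Iv ?R J) TYPE('f)" using insert(3) R' by blast
      have fC: "finite {x. (x, \<alpha>) \<in> R}"
      proof (rule finite_subset[of _ "Domain R"])
        show "{x. (x, \<alpha>) \<in> R} \<subseteq> Domain R" by auto
        show "finite (Domain R)" using R by (simp add: finite_Domain)
      qed
      have neC: "{x. (x, \<alpha>) \<in> R} \<noteq> {}" using True by auto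
      have acA: "acyc_cplx (ZJ Iv ?R J) TYPE('f)"
      proof (rule acyclic_transfer[OF cplx_ZJ cplx_ZJ ZJ_mono_J IH'])
        show "finite ?R" using R' by simp
        show "finite ?R" using R' by simp
        show "{} \<subseteq> J" by simp
        show "acyc_cplx (ZJ Iv ?R {}) TYPE('f)"
          unfolding ZJ_empty_alpha[OF conjunct2[OF R]] using acyclic_full[OF fC neC] .
      qed
      have vK: "\<And>\<sigma>. \<sigma> \<in> ZJ Iv R J \<Longrightarrow> \<alpha> \<notin> \<sigma>"
        using \<alpha>I insert(2) unfolding ZJ_def by blast
      have g2: "good (ZJ Iv R J) (ZJ Iv R (insert \<alpha> J)) TYPE('f)"
        by (rule cone_good[OF cplx_ZJ cplx_ZJ ZJ_mono_R vK dowker_step acA])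
          (use R R' True insert(2) in auto)
      show ?thesis
        by (rule good_trans[OF cplx_ZJ cplx_ZJ cplx_ZJ ZJ_mono_J ZJ_mono_J IH g2])
          (use R in auto)
    qed
  qed
qed

lemma dowker:
  assumes "finite R" "R \<subseteq> (- Iv) \<times> Iv"
  shows "good (ZJ Iv R {}) (Zf Iv R) TYPE('f::field)"
proof -
  have "\<forall>R'. finite R' \<and> R' \<subseteq> (- Iv) \<times> Iv \<longrightarrow> good (ZJ Iv R' {}) (ZJ Iv R' (Range R)) TYPE('f)"
    by (rule dowker_J) (simp add: finite_Range assms(1))
  then have "good (ZJ Iv R {}) (ZJ Iv R (Range R)) TYPE('f)" using assms by blast
  then show ?thesis unfolding ZJ_Range .
qed

definition tmap :: "('a \<Rightarrow> 'v) \<Rightarrow> ('a set \<Rightarrow> 'f::field) \<Rightarrow> ('v set \<Rightarrow> 'f)" where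
  "tmap f c = (\<lambda>\<tau>. if \<tau> \<subseteq> range f then c (f -` \<tau>) else 0)"

context
  fixes f :: "'a::linorder \<Rightarrow> 'v::linorder"
  assumes injf: "inj f" and smf: "strict_mono f"
begin

lemma vim_im: "f -` (f ` \<sigma>) = \<sigma>" using injf by (simp add: inj_vimage_image_eq)

lemma tmap_im: "tmap f c (f ` \<sigma>) = c \<sigma>"
proof -
  have "f ` \<sigma> \<subseteq> range f" by auto
  then show ?thesis unfolding tmap_def vim_im by simp
qed

lemma card_im: "card (f ` \<sigma>) = card \<sigma>" using injf by (simp add: card_image inj_on_subset)

lemma im_inj: "f ` a = f ` b \<longleftrightarrow> a = b" using injf by (simp add: inj_image_eq_iff)

lemma im_sub: "f ` a \<subseteq> f ` b \<longleftrightarrow> a \<subseteq> b" using injf by (simp add: inj_image_subset_iff)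

lemma tmap_inj: "inj (tmap f :: ('a set \<Rightarrow> 'f::field) \<Rightarrow> _)"
proof (rule injI)
  fix c d :: "'a set \<Rightarrow> 'f" assume "tmap f c = tmap f d"
  then have "tmap f c (f ` \<sigma>) = tmap f d (f ` \<sigma>)" for \<sigma> by simp
  then show "c = d" unfolding tmap_im by auto
qed

lemma tmap_lin: "tmap f (\<lambda>x. a * u x + v x) = (\<lambda>x. a * tmap f u x + tmap f v x)"
  unfolding tmap_def by auto

lemma tmap_0: "tmap f (\<lambda>_. 0) = (\<lambda>_. 0)" unfolding tmap_def by auto

lemma tmap_chains: "tmap f ` chains K k = chains ((`) f ` K) k"
proof
  show "tmap f ` chains K k \<subseteq> chains ((`) f ` K) k"
  proof
    fix d assume "d \<in> tmap f ` chains K k"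
    then obtain c where c: "c \<in> chains K k" "d = tmap f c" by auto
    show "d \<in> chains ((`) f ` K) k"
      unfolding chains_def mem_Collect_eq
    proof (intro allI impI)
      fix \<tau> assume "d \<tau> \<noteq> 0"
      then have t: "\<tau> \<subseteq> range f" "c (f -` \<tau>) \<noteq> 0" using c unfolding tmap_def by (auto split: if_splits)
      then have "f -` \<tau> \<in> simplices K k" using c unfolding chains_def by auto
      moreover have "f ` (f -` \<tau>) = \<tau>" using t by auto
      ultimately show "\<tau> \<in> simplices ((`) f ` K) k" unfolding simplices_def using card_im by (metis (mono_tags, lifting) image_eqI mem_Collect_eq)
    qed
  qed
next
  show "chains ((`) f ` K) k \<subseteq> tmap f ` chains K k"
  proof
    fix d assume d: "d \<in> chains ((`) f ` K) k"
    define c where "c = (\<lambda>\<sigma>. d (f ` \<sigma>))"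
    have "c \<in> chains K k"
      unfolding chains_def mem_Collect_eq
    proof (intro allI impI)
      fix \<sigma> assume "c \<sigma> \<noteq> 0"
      then have "f ` \<sigma> \<in> simplices ((`) f ` K) k" using d unfolding c_def chains_def by auto
      then show "\<sigma> \<in> simplices K k" unfolding simplices_def using im_inj card_im by auto
    qed
    moreover have "d = tmap f c"
    proof
      fix \<tau>
      show "d \<tau> = tmap f c \<tau>"
      proof (cases "\<tau> \<subseteq> range f")
        case True
        then have "f ` (f -` \<tau>) = \<tau>" by auto
        then show ?thesis unfolding tmap_def c_def using True by simp
      next
        case False
        then have "d \<tau> = 0" using d unfolding chains_def simplices_def by auto
        then show ?thesis unfolding tmap_def using False by simp
      qed
    qed
    ultimately show "d \<in> tmap f ` chains K k" by blast
  qed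
qed

lemma tmap_comm: "tmap f (boundary K k c) = boundary ((`) f ` K) k (tmap f c)"
proof
  fix \<tau>
  show "tmap f (boundary K k c) \<tau> = boundary ((`) f ` K) k (tmap f c) \<tau>"
  proof (cases "\<tau> \<in> (`) f ` K")
    case False
    have "tmap f (boundary K k c) \<tau> = 0"
    proof (cases "\<tau> \<subseteq> range f")
      case True
      then have e: "f ` (f -` \<tau>) = \<tau>" by auto
      have "f -` \<tau> \<notin> K"
      proof
        assume "f -` \<tau> \<in> K"
        then have "f ` (f -` \<tau>) \<in> (`) f ` K" by blast
        then show False using e False by simp
      qed
      then show ?thesis unfolding tmap_def by (simp add: boundary_outside)
    qed (simp add: tmap_def)
    then show ?thesis using False by (simp add: boundary_outside)
  next
    case True
    then obtain \<rho> where r: "\<rho> \<in> K" "\<tau> = f ` \<rho>" by auto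
    have lhs: "tmap f (boundary K k c) \<tau> = boundary K k c \<rho>" unfolding r(2) tmap_im ..
    show ?thesis
    proof (cases "card \<rho> = k")
      case False
      have "boundary K k c \<rho> = 0" unfolding boundary_def using False by simp
      moreover have "boundary ((`) f ` K) k (tmap f c) \<tau> = 0" unfolding boundary_def using False r card_im by simp
      ultimately show ?thesis using lhs by simp
    next
      case True
      have S: "{\<sigma>' \<in> simplices ((`) f ` K) k. \<tau> \<subseteq> \<sigma>'} = (`) f ` {\<sigma> \<in> simplices K k. \<rho> \<subseteq> \<sigma>}"
      proof
        show "{\<sigma>' \<in> simplices ((`) f ` K) k. \<tau> \<subseteq> \<sigma>'} \<subseteq> (`) f ` {\<sigma> \<in> simplices K k. \<rho> \<subseteq> \<sigma>}"
          unfolding simplices_def r(2) using card_im im_sub by auto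
        show "(`) f ` {\<sigma> \<in> simplices K k. \<rho> \<subseteq> \<sigma>} \<subseteq> {\<sigma>' \<in> simplices ((`) f ` K) k. \<tau> \<subseteq> \<sigma>'}"
          unfolding simplices_def r(2) using card_im im_sub by auto
      qed
      have injI: "inj_on ((`) f) X" for X using im_inj by (auto intro: inj_onI)
      have term1: "(- 1) ^ card {u \<in> f ` \<sigma>. u < the_elem (f ` \<sigma> - \<tau>)} * tmap f c (f ` \<sigma>)
          = (- 1) ^ card {u \<in> \<sigma>. u < the_elem (\<sigma> - \<rho>)} * c \<sigma>"
        if s: "\<sigma> \<in> {\<sigma> \<in> simplices K k. \<rho> \<subseteq> \<sigma>}" for \<sigma>
      proof -
        have s': "card \<sigma> = Suc k" "\<rho> \<subseteq> \<sigma>" using s unfolding simplices_def by auto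
        then have fs: "finite \<sigma>" by (metis card.infinite nat.distinct(1))
        then have "finite \<rho>" using s' finite_subset by blast
        then have "card (\<sigma> - \<rho>) = 1" using s' True by (simp add: card_Diff_subset)
        then obtain u where u: "\<sigma> - \<rho> = {u}" by (auto simp: card_Suc_eq)
        have e: "f ` \<sigma> - \<tau> = {f u}" unfolding r(2) using u injf by (metis image_empty image_insert image_set_diff)
        have e2: "{w \<in> f ` \<sigma>. w < f u} = f ` {w \<in> \<sigma>. w < u}"
          using strict_mono_less[OF smf] by auto
        show ?thesis unfolding e e2 u the_elem_eq card_im tmap_im ..
      qed
      have "boundary ((`) f ` K) k (tmap f c) \<tau> =
          (\<Sum>\<sigma>' \<in> (`) f ` {\<sigma> \<in> simplices K k. \<rho> \<subseteq> \<sigma>}. (- 1) ^ card {u \<in> \<sigma>'. u < the_elem (\<sigma>' - \<tau>)} * tmap f c \<sigma>')"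
        unfolding boundary_def S[symmetric] using True r card_im by simp
      also have "\<dots> = (\<Sum>\<sigma> \<in> {\<sigma> \<in> simplices K k. \<rho> \<subseteq> \<sigma>}. (- 1) ^ card {u \<in> f ` \<sigma>. u < the_elem (f ` \<sigma> - \<tau>)} * tmap f c (f ` \<sigma>))"
        by (rule sum.reindex[OF injI, unfolded comp_def])
      also have "\<dots> = (\<Sum>\<sigma> \<in> {\<sigma> \<in> simplices K k. \<rho> \<subseteq> \<sigma>}. (- 1) ^ card {u \<in> \<sigma>. u < the_elem (\<sigma> - \<rho>)} * c \<sigma>)"
        by (rule sum.cong[OF refl], rule term1)
      also have "\<dots> = boundary K k c \<rho>" unfolding boundary_def using True r by simp
      finally show ?thesis unfolding lhs ..
    qed
  qed
qed

lemma transport: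
  "(pers_homology K K' k :: ('a set \<Rightarrow> 'f::field) set set) \<cong>\<^sub>Q
     (pers_homology ((`) f ` K) ((`) f ` K') k :: ('v set \<Rightarrow> 'f) set set)"
proof (rule map_pers[OF tmap_inj tmap_lin])
  show "tmap f ` cycles K k = cycles ((`) f ` K) k"
    by (rule chainmap_cycles_boundaries(1)[OF tmap_inj tmap_0 tmap_comm tmap_chains])
  show "tmap f ` boundaries K' k = boundaries ((`) f ` K') k"
    by (rule chainmap_cycles_boundaries(2)[OF tmap_inj tmap_0 tmap_comm tmap_chains])
qed

end

definition enc1 :: "'a \<Rightarrow> 'a option \<times> (nat \<times> nat) option" where
  "enc1 x = (Some x, None)"

definition enc2 :: "nat \<times> nat \<Rightarrow> 'a option \<times> (nat \<times> nat) option" where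
  "enc2 b = (None, Some b)"

lemma enc1_inj: "inj enc1" unfolding enc1_def by (auto intro: injI)
lemma enc2_inj: "inj enc2" unfolding enc2_def by (auto intro: injI)
lemma enc1_mono: "strict_mono (enc1 :: 'a::linorder \<Rightarrow> _)"
  unfolding enc1_def by (auto intro!: strict_monoI simp: less_prod_def)
lemma enc2_mono: "strict_mono (enc2 :: _ \<Rightarrow> 'a::linorder option \<times> _)"
  unfolding enc2_def by (auto intro!: strict_monoI simp: less_prod_def)

definition Ivs :: "('a option \<times> (nat \<times> nat) option) set" where
  "Ivs = {p. fst p = None}"

definition Rel :: "(nat \<Rightarrow> nat) \<Rightarrow> (nat \<Rightarrow> nat \<Rightarrow> 'a set) \<Rightarrow> nat \<Rightarrow> (('a option \<times> (nat \<times> nat) option) \<times> ('a option \<times> (nat \<times> nat) option)) set" where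
  "Rel n C m = (\<lambda>(x, b). (enc1 x, enc2 b)) ` {(x, b). b \<in> index_set n m \<and> x \<in> C (fst b) (snd b)}"

lemma enc1_eq[simp]: "enc1 x = enc1 y \<longleftrightarrow> x = y" unfolding enc1_def by simp
lemma enc2_eq[simp]: "enc2 x = enc2 y \<longleftrightarrow> x = y" unfolding enc2_def by simp
lemma enc12[simp]: "enc1 x \<noteq> enc2 y" "enc2 y \<noteq> enc1 x" unfolding enc1_def enc2_def by simp_all

lemma Rel_sub: "Rel n C m \<subseteq> (- Ivs) \<times> Ivs"
  unfolding Rel_def Ivs_def enc1_def enc2_def by auto

lemma Rel_mono:
  assumes "m \<le> m'" shows "Rel n C m \<subseteq> Rel n C m'"
proof -
  have "index_set n m \<subseteq> index_set n m'" unfolding index_set_def using assms by auto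
  then show ?thesis unfolding Rel_def by (intro image_mono) auto
qed

lemma index_set_fin: "finite (index_set n m)"
proof -
  have "index_set n m \<subseteq> Sigma {1..m} (\<lambda>l. {1..n l})" unfolding index_set_def by auto
  then show ?thesis by (rule finite_subset) auto
qed

lemma Rel_fin:
  assumes "finite X" "\<And>b. b \<in> index_set n m \<Longrightarrow> C (fst b) (snd b) \<subseteq> X"
  shows "finite (Rel n C m)"
proof -
  have "Rel n C m \<subseteq> (\<lambda>(x, b). (enc1 x, enc2 b)) ` (X \<times> index_set n m)"
    unfolding Rel_def using assms(2) by (intro image_mono) auto
  then show ?thesis by (rule finite_subset) (use assms(1) index_set_fin in auto)
qed

lemma Rel_enc: "(enc1 x, enc2 b) \<in> Rel n C m \<longleftrightarrow> b \<in> index_set n m \<and> x \<in> C (fst b) (snd b)"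
  unfolding Rel_def by auto

lemma Rel_mem: "(p, q) \<in> Rel n C m \<Longrightarrow> \<exists>x b. p = enc1 x \<and> q = enc2 b"
  unfolding Rel_def by auto

lemma ZJ_I:
  assumes "T \<noteq> {}" "T \<inter> Iv \<subseteq> J" "insert x (T - Iv) \<times> insert i (T \<inter> Iv) \<subseteq> R"
  shows "T \<in> ZJ Iv R J"
proof -
  have "\<exists>x i. insert x (T - Iv) \<times> insert i (T \<inter> Iv) \<subseteq> R" using assms(3) by (intro exI)
  then show ?thesis unfolding ZJ_def using assms(1,2) by simp
qed

lemma K_eq: "ZJ Ivs (Rel n C m) {} = (`) enc1 ` MCF n C m"
proof
  show "ZJ Ivs (Rel n C m) {} \<subseteq> (`) enc1 ` MCF n C m"
  proof
    fix T assume "T \<in> ZJ Ivs (Rel n C m) {}"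
    then obtain x i where T: "T \<noteq> {}" "T \<inter> Ivs = {}" "insert x (T - Ivs) \<times> insert i (T \<inter> Ivs) \<subseteq> Rel n C m"
      unfolding ZJ_def by blast
    have TI: "T - Ivs = T" "T \<inter> Ivs = {}" using T(2) by auto
    have R: "(y, i) \<in> Rel n C m" if "y \<in> T" for y using T(3) that unfolding TI by auto
    obtain y0 where "y0 \<in> T" using T(1) by auto
    then obtain b where b: "i = enc2 b" using Rel_mem[OF R[of y0]] by blast
    define S where "S = {y. enc1 y \<in> T}"
    have TS: "T = enc1 ` S"
    proof
      show "T \<subseteq> enc1 ` S"
      proof
        fix y assume "y \<in> T"
        then obtain y' where "y = enc1 y'" using Rel_mem[OF R[of y]] by blast
        then show "y \<in> enc1 ` S" using \<open>y \<in> T\<close> unfolding S_def by auto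
      qed
    qed (auto simp: S_def)
    have Sb: "b \<in> index_set n m \<and> y \<in> C (fst b) (snd b)" if "y \<in> S" for y
    proof -
      have "(enc1 y, enc2 b) \<in> Rel n C m" using R b that unfolding S_def by auto
      then show ?thesis unfolding Rel_enc .
    qed
    have "S \<noteq> {}" using TS T(1) by auto
    then obtain y1 where "y1 \<in> S" by auto
    then have bI: "b \<in> index_set n m" using Sb by blast
    obtain l j where lj: "b = (l, j)" by (cases b)
    have "S \<subseteq> C l j" using Sb lj by auto
    moreover have "l \<in> {1..m}" "j \<in> {1..n l}" using bI lj unfolding index_set_def by auto
    ultimately have "S \<in> MCF n C m" using \<open>S \<noteq> {}\<close> unfolding MCF_def by blast
    then show "T \<in> (`) enc1 ` MCF n C m" using TS by auto
  qed
next
  show "(`) enc1 ` MCF n C m \<subseteq> ZJ Ivs (Rel n C m) {}"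
  proof
    fix T assume "T \<in> (`) enc1 ` MCF n C m"
    then obtain S where S0: "T = enc1 ` S" "S \<in> MCF n C m" by blast
    then obtain l j where S1: "S \<noteq> {}" "S \<subseteq> C l j" "l \<in> {1..m}" "j \<in> {1..n l}"
      unfolding MCF_def by blast
    note S = S0(1) S1
    obtain s0 where "s0 \<in> S" using S by auto
    have TI: "T - Ivs = T" "T \<inter> Ivs = {}" using S(1) unfolding Ivs_def enc1_def by auto
    have lj: "(l, j) \<in> index_set n m" using S unfolding index_set_def by auto
    have "insert (enc1 s0) T \<times> {enc2 (l, j)} \<subseteq> Rel n C m"
    proof
      fix p :: "('a option \<times> (nat \<times> nat) option) \<times> ('a option \<times> (nat \<times> nat) option)"
      assume "p \<in> insert (enc1 s0) T \<times> {enc2 (l, j)}"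
      then obtain y where y: "y \<in> S" "p = (enc1 y, enc2 (l, j))" using S(1) \<open>s0 \<in> S\<close> by auto
      then have "y \<in> C (fst (l, j)) (snd (l, j))" using S(3) by auto
      then show "p \<in> Rel n C m" using Rel_enc[of y "(l, j)" n C m] lj y(2) by simp
    qed
    then have "insert (enc1 s0) (T - Ivs) \<times> insert (enc2 (l, j)) (T \<inter> Ivs) \<subseteq> Rel n C m" unfolding TI by simp
    then show "T \<in> ZJ Ivs (Rel n C m) {}" using S(1,2) TI by (intro ZJ_I) auto
  qed
qed

lemma N_eq: "ZJ (- Ivs) ((Rel n C m)\<inverse>) {} = (`) enc2 ` MCN n C m"
proof
  show "ZJ (- Ivs) ((Rel n C m)\<inverse>) {} \<subseteq> (`) enc2 ` MCN n C m"
  proof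
    fix T assume "T \<in> ZJ (- Ivs) ((Rel n C m)\<inverse>) {}"
    then obtain x i where T: "T \<noteq> {}" "T \<inter> - Ivs = {}" "insert x (T - - Ivs) \<times> insert i (T \<inter> - Ivs) \<subseteq> (Rel n C m)\<inverse>"
      unfolding ZJ_def by blast
    have TI: "T - - Ivs = T" "T \<inter> - Ivs = {}" using T(2) by auto
    have R: "(i, t) \<in> Rel n C m" if "t \<in> T" for t using T(3) that unfolding TI by auto
    obtain t0 where "t0 \<in> T" using T(1) by auto
    then obtain y where y: "i = enc1 y" using Rel_mem[OF R[of t0]] by blast
    define S where "S = {b. enc2 b \<in> T}"
    have TS: "T = enc2 ` S"
    proof
      show "T \<subseteq> enc2 ` S"
      proof
        fix t assume "t \<in> T"
        then obtain b where "t = enc2 b" using Rel_mem[OF R[of t]] by blast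
        then show "t \<in> enc2 ` S" using \<open>t \<in> T\<close> unfolding S_def by auto
      qed
    qed (auto simp: S_def)
    have Sb: "b \<in> index_set n m \<and> y \<in> C (fst b) (snd b)" if "b \<in> S" for b
    proof -
      have "(enc1 y, enc2 b) \<in> Rel n C m" using R y that unfolding S_def by auto
      then show ?thesis unfolding Rel_enc .
    qed
    have "S \<noteq> {}" using TS T(1) by auto
    moreover have "S \<subseteq> index_set n m" using Sb by auto
    moreover have "y \<in> (\<Inter>\<alpha> \<in> S. C (fst \<alpha>) (snd \<alpha>))" using Sb by auto
    ultimately have "S \<in> MCN n C m" unfolding MCN_def by auto
    then show "T \<in> (`) enc2 ` MCN n C m" using TS by auto
  qed
next
  show "(`) enc2 ` MCN n C m \<subseteq> ZJ (- Ivs) ((Rel n C m)\<inverse>) {}"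
  proof
    fix T :: "('a option \<times> (nat \<times> nat) option) set"
    assume "T \<in> (`) enc2 ` MCN n C m"
    then obtain S where S0: "T = enc2 ` S" "S \<in> MCN n C m" by blast
    then have S1: "S \<noteq> {}" "S \<subseteq> index_set n m" "(\<Inter>\<alpha> \<in> S. C (fst \<alpha>) (snd \<alpha>)) \<noteq> {}"
      unfolding MCN_def by auto
    note S = S0(1) S1
    obtain y where y: "y \<in> (\<Inter>\<alpha> \<in> S. C (fst \<alpha>) (snd \<alpha>))" using S(4) by auto
    obtain b0 where "b0 \<in> S" using S by auto
    have TI: "T - - Ivs = T" "T \<inter> - Ivs = {}" using S(1) unfolding Ivs_def enc2_def by auto
    have "insert (enc2 b0) T \<times> {enc1 y} \<subseteq> (Rel n C m)\<inverse>"
    proof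
      fix p assume "p \<in> insert (enc2 b0) T \<times> {enc1 y}"
      then obtain b where b: "b \<in> S" "p = (enc2 b, enc1 y)" using S(1) \<open>b0 \<in> S\<close> by auto
      then have "b \<in> index_set n m" "y \<in> C (fst b) (snd b)" using S(3) y by auto
      then show "p \<in> (Rel n C m)\<inverse>" using Rel_enc[of y b n C m] b(2) by simp
    qed
    then have "insert (enc2 b0) (T - - Ivs) \<times> insert (enc1 y) (T \<inter> - Ivs) \<subseteq> (Rel n C m)\<inverse>" unfolding TI by simp
    then show "T \<in> ZJ (- Ivs) ((Rel n C m)\<inverse>) {}" using S(1,2) TI by (intro ZJ_I) auto
  qed
qed

lemma Zf_mono: "R \<subseteq> R' \<Longrightarrow> Zf Iv R \<subseteq> Zf Iv R'"
  unfolding ZJ_Range[symmetric] by (meson ZJ_mono_J ZJ_mono_R Range_mono subset_trans)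

lemma K_sub_Zf: "ZJ Iv R {} \<subseteq> Zf Iv R"
  unfolding ZJ_Range[symmetric] by (rule ZJ_mono_J) simp

lemma cplx_Zf: "finite R \<Longrightarrow> cplx (Zf Iv R)"
  unfolding ZJ_Range[symmetric] by (rule cplx_ZJ)

theorem proposition7:
  fixes X :: "'a::linorder set" and M :: nat
    and n :: "nat \<Rightarrow> nat" and C :: "nat \<Rightarrow> nat \<Rightarrow> 'a set"
    and k m p :: nat
  assumes "finite X"
    and "\<And>l. l \<in> {1..M} \<Longrightarrow> enum_partition X (n l) (C l)"
    and "1 \<le> m" and "m + p \<le> M"
  shows "(pers_homology (MCN n C m) (MCN n C (m + p)) k :: ((nat \<times> nat) set \<Rightarrow> 'f::field) set set)
           \<cong>\<^sub>Q (pers_homology (MCF n C m) (MCF n C (m + p)) k :: ('a set \<Rightarrow> 'f) set set)"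
proof -
  have Csub: "C (fst b) (snd b) \<subseteq> X" if "b \<in> index_set n m'" "m' \<le> M" for b m'
  proof -
    obtain l i where b: "b = (l, i)" by (cases b)
    have "l \<in> {1..M}" "i \<in> {1..n l}" using that b unfolding index_set_def by auto
    then have "enum_partition X (n l) (C l)" using assms(2) by blast
    then have "C l i \<subseteq> X" using \<open>i \<in> {1..n l}\<close> unfolding enum_partition_def by blast
    then show ?thesis using b by simp
  qed
  have fin: "finite (Rel n C m')" if "m' \<le> M" for m'
    by (rule Rel_fin[OF assms(1)]) (use Csub that in blast)
  define R1 where "R1 = Rel n C m"
  define R2 where "R2 = Rel n C (m + p)"
  have f1: "finite R1" and f2: "finite R2" unfolding R1_def R2_def using fin assms(4) by auto
  have R12: "R1 \<subseteq> R2" unfolding R1_def R2_def by (rule Rel_mono) simp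
  have s1: "R1 \<subseteq> (- Ivs) \<times> Ivs" and s2: "R2 \<subseteq> (- Ivs) \<times> Ivs" unfolding R1_def R2_def by (rule Rel_sub)+
  have s1': "R1\<inverse> \<subseteq> (- (- Ivs)) \<times> (- Ivs)" and s2': "R2\<inverse> \<subseteq> (- (- Ivs)) \<times> (- Ivs)" using s1 s2 by auto
  have f1': "finite (R1\<inverse>)" and f2': "finite (R2\<inverse>)" using f1 f2 by auto
  have R12': "R1\<inverse> \<subseteq> R2\<inverse>" using R12 by auto
  have gK1: "good (ZJ Ivs R1 {}) (Zf Ivs R1) TYPE('f)" by (rule dowker[OF f1 s1])
  have gK2: "good (ZJ Ivs R2 {}) (Zf Ivs R2) TYPE('f)" by (rule dowker[OF f2 s2])
  have gN1: "good (ZJ (- Ivs) (R1\<inverse>) {}) (Zf Ivs R1) TYPE('f)"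
    using dowker[OF f1' s1', where 'f='f] unfolding Zf_swap .
  have gN2: "good (ZJ (- Ivs) (R2\<inverse>) {}) (Zf Ivs R2) TYPE('f)"
    using dowker[OF f2' s2', where 'f='f] unfolding Zf_swap .
  have P1: "(pers_homology (ZJ Ivs R1 {}) (ZJ Ivs R2 {}) k :: (_ \<Rightarrow> 'f) set set)
      \<cong>\<^sub>Q pers_homology (Zf Ivs R1) (Zf Ivs R2) k"
    by (rule good_pers[OF cplx_ZJ[OF f1] cplx_ZJ[OF f2] cplx_Zf[OF f1] cplx_Zf[OF f2]
          ZJ_mono_R[OF R12] Zf_mono[OF R12] K_sub_Zf K_sub_Zf gK1 gK2])
  have P2: "(pers_homology (ZJ (- Ivs) (R1\<inverse>) {}) (ZJ (- Ivs) (R2\<inverse>) {}) k :: (_ \<Rightarrow> 'f) set set)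
      \<cong>\<^sub>Q pers_homology (Zf Ivs R1) (Zf Ivs R2) k"
  proof (rule good_pers[OF cplx_ZJ[OF f1'] cplx_ZJ[OF f2'] cplx_Zf[OF f1] cplx_Zf[OF f2]
          ZJ_mono_R[OF R12'] Zf_mono[OF R12] _ _ gN1 gN2])
    show "ZJ (- Ivs) (R1\<inverse>) {} \<subseteq> Zf Ivs R1" using K_sub_Zf[of "- Ivs" "R1\<inverse>"] unfolding Zf_swap .
    show "ZJ (- Ivs) (R2\<inverse>) {} \<subseteq> Zf Ivs R2" using K_sub_Zf[of "- Ivs" "R2\<inverse>"] unfolding Zf_swap .
  qed
  have T1: "(pers_homology (MCF n C m) (MCF n C (m + p)) k :: ('a set \<Rightarrow> 'f) set set)
      \<cong>\<^sub>Q pers_homology (ZJ Ivs R1 {}) (ZJ Ivs R2 {}) k"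
    using transport[OF enc1_inj enc1_mono, of "MCF n C m" "MCF n C (m + p)" k, where 'f='f]
    unfolding R1_def R2_def K_eq .
  have T2: "(pers_homology (MCN n C m) (MCN n C (m + p)) k :: ((nat \<times> nat) set \<Rightarrow> 'f) set set)
      \<cong>\<^sub>Q pers_homology (ZJ (- Ivs) (R1\<inverse>) {}) (ZJ (- Ivs) (R2\<inverse>) {}) k"
    using transport[OF enc2_inj enc2_mono, of "MCN n C m" "MCN n C (m + p)" k, where 'f='f]
    unfolding R1_def R2_def N_eq .
  have P1s: "pers_homology (Zf Ivs R1) (Zf Ivs R2) k
      \<cong>\<^sub>Q (pers_homology (ZJ Ivs R1 {}) (ZJ Ivs R2 {}) k :: (_ \<Rightarrow> 'f) set set)"
    by (rule quot_iso_sym[OF P1 pers_closed])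
  have T1s: "pers_homology (ZJ Ivs R1 {}) (ZJ Ivs R2 {}) k
      \<cong>\<^sub>Q (pers_homology (MCF n C m) (MCF n C (m + p)) k :: ('a set \<Rightarrow> 'f) set set)"
    by (rule quot_iso_sym[OF T1 pers_closed])
  show ?thesis
    by (rule quot_iso_trans[OF T2 quot_iso_trans[OF P2 quot_iso_trans[OF P1s T1s]]])
qed

end
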